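(* For $n\ge1$ one has $\tilde S_n=2H_n$, where $H_n=\sum_{k=0}^{n-1}R_{(1^k,n-k)}$. Moreover $\mathcal{P}=\bigoplus_n\mathcal{P}_n$ is the subalgebra of $\mathbf{Sym}$ generated by the elements $T_{2k+1}=R_{(2^k,1)}$, $k\ge0$ (here $(2^k,1)$ is the composition with $k$ parts equal to $2$ followed by one part $1$). For each $n$, the products $T^I=T_{i_1}T_{i_2}\cdots T_{i_r}$, where $I=(i_1,\dots,i_r)$ runs over the compositions of $n$ with all parts odd, form a basis of $\mathcal{P}_n$.
   Context: $\mathbf{Sym}$ is the free associative $\mathbb{Q}$-algebra on $S_1,S_2,\dots$ (with $S_0=1$, $\deg S_n=n$). For a composition $I=(i_1,\dots,i_r)$ of $n$, let $S^I=S_{i_1}\cdots S_{i_r}$ and $\operatorname{Des}(I)=\{i_1,\dots,i_1+\cdots+i_{r-1}\}$. Ribbons $R_J$ are defined by $S^I=\sum_{J\models n,\ \operatorname{Des}(J)\subseteq\operatorname{Des}(I)}R_J$, and $\Lambda_n=R_{(1^n)}$ with $\Lambda_0=1$; $(1^k,m)$ denotes $k$ parts $1$ followed by a part $m$. Set $\tilde S_n=\sum_{k=0}^n\Lambda_kS_{n-k}$, the image of $S_n$ under the $(1-q)$-transform at $q=-1$. The peak set of $J$ is $HP(J)=\{a\in\operatorname{Des}(J):a\ne1,\ a-1\notin\operatorname{Des}(J)\}$; $\mathcal{P}_n$ is the linear span of the elements $\Pi_P=\sum_{J\models n,\ HP(J)=P}R_J$. *)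

theory Defs
  imports Complex_Main "HOL-Library.Function_Algebras"
begin

text \<open>Model of Sym: the free associative Q-algebra on S_1, S_2, ... has the words
  S^I (I a composition, i.e. a list of positive naturals) as a linear basis, with
  S^I S^J = S^(I@J).  An element is represented by its coefficient function in
  this basis (finitely supported for all elements considered here).\<close>

type_synonym nsym = "nat list \<Rightarrow> rat"

definition sw :: "nat list \<Rightarrow> nsym" where
  "sw I = (\<lambda>w. if w = I then 1 else 0)"

definition one_s :: nsym where
  "one_s = sw []"

definition mul :: "nsym \<Rightarrow> nsym \<Rightarrow> nsym" where
  "mul f g = (\<lambda>w. \<Sum>i\<le>length w. f (take i w) * g (drop i w))"

definition smul :: "rat \<Rightarrow> nsym \<Rightarrow> nsym" where
  "smul c f = (\<lambda>w. c * f w)"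

definition Sn :: "nat \<Rightarrow> nsym" where
  "Sn m = sw (if m = 0 then [] else [m])"

definition comps :: "nat \<Rightarrow> nat list set" where
  "comps n = {I. 0 \<notin> set I \<and> sum_list I = n}"

definition Des :: "nat list \<Rightarrow> nat set" where
  "Des I = {sum_list (take j I) | j. 1 \<le> j \<and> j < length I}"

text \<open>Ribbon R_J: Moebius inversion of S^I = sum over Des J \<subseteq> Des I of R_J.\<close>
definition ribbon :: "nat list \<Rightarrow> nsym" where
  "ribbon J = (\<Sum>I\<in>{I\<in>comps (sum_list J). Des I \<subseteq> Des J}.
                 smul ((-1) ^ (length J - length I)) (sw I))"

definition Lam :: "nat \<Rightarrow> nsym" where
  "Lam k = ribbon (replicate k 1)"

definition Stilde :: "nat \<Rightarrow> nsym" where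
  "Stilde n = (\<Sum>k\<le>n. mul (Lam k) (Sn (n - k)))"

definition H :: "nat \<Rightarrow> nsym" where
  "H n = (\<Sum>k<n. ribbon (replicate k 1 @ [n - k]))"

definition HP :: "nat list \<Rightarrow> nat set" where
  "HP J = {a \<in> Des J. a \<noteq> 1 \<and> a - 1 \<notin> Des J}"

definition PiP :: "nat \<Rightarrow> nat set \<Rightarrow> nsym" where
  "PiP n P = (\<Sum>J\<in>{J\<in>comps n. HP J = P}. ribbon J)"

definition lspan :: "nsym set \<Rightarrow> nsym set" where
  "lspan A = {f. \<exists>B c. finite B \<and> B \<subseteq> A \<and> f = (\<Sum>b\<in>B. smul (c b) b)}"

definition Pn :: "nat \<Rightarrow> nsym set" where
  "Pn n = lspan {PiP n P | P. True}"

text \<open>The (internal) direct sum of all P_n.\<close>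
definition calP :: "nsym set" where
  "calP = lspan (\<Union>n. Pn n)"

inductive_set gen_alg :: "nsym set \<Rightarrow> nsym set" for G :: "nsym set" where
  gen_one: "one_s \<in> gen_alg G"
| gen_base: "g \<in> G \<Longrightarrow> g \<in> gen_alg G"
| gen_add: "f \<in> gen_alg G \<Longrightarrow> g \<in> gen_alg G \<Longrightarrow> f + g \<in> gen_alg G"
| gen_smul: "f \<in> gen_alg G \<Longrightarrow> smul c f \<in> gen_alg G"
| gen_mul: "f \<in> gen_alg G \<Longrightarrow> g \<in> gen_alg G \<Longrightarrow> mul f g \<in> gen_alg G"

text \<open>T_i = R_(2^k,1) for i = 2k+1 (used only for odd i).\<close>
definition Todd :: "nat \<Rightarrow> nsym" where
  "Todd i = ribbon (replicate (i div 2) 2 @ [1])"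

definition Tprod :: "nat list \<Rightarrow> nsym" where
  "Tprod I = foldr (\<lambda>i acc. mul (Todd i) acc) I one_s"

definition oddcomps :: "nat \<Rightarrow> nat list set" where
  "oddcomps n = {I \<in> comps n. \<forall>i\<in>set I. odd i}"

end

theory Submission
  imports Defs
begin


lemma sum_fun_apply: "(\<Sum>x\<in>X. F x) w = (\<Sum>x\<in>X. F x w)"
  by (induction X rule: infinite_finite_induct) auto

lemma smul_apply: "smul c f w = c * f w" by (simp add: smul_def)

lemma sw_apply: "sw I w = (if w = I then 1 else 0)" by (simp add: sw_def)

lemma comps_Nil[simp]: "[] \<in> comps n \<longleftrightarrow> n = 0" by (auto simp: comps_def)

lemma comps_Cons[simp]: "a # I \<in> comps n \<longleftrightarrow> 0 < a \<and> a \<le> n \<and> I \<in> comps (n - a)"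
  by (auto simp: comps_def)

lemma comps_sum: "I \<in> comps n \<Longrightarrow> sum_list I = n" by (simp add: comps_def)

lemma comps_0: "comps 0 = {[]}"
proof -
  have "I = []" if "I \<in> comps 0" for I using that
    by (cases I) (auto simp: comps_def)
  then show ?thesis by auto
qed

lemma comps_append: "a \<in> comps m \<Longrightarrow> b \<in> comps k \<Longrightarrow> a @ b \<in> comps (m + k)"
  by (auto simp: comps_def)

lemma length_le_sum: "0 \<notin> set I \<Longrightarrow> length I \<le> sum_list I"
  by (induction I) (auto simp: Suc_le_eq)

lemma comps_finite: "finite (comps n)"
proof -
  have "comps n \<subseteq> {xs. set xs \<subseteq> {..n} \<and> length xs \<le> n}"
    using length_le_sum member_le_sum_list by (fastforce simp: comps_def)
  moreover have "finite {xs. set xs \<subseteq> {..n} \<and> length xs \<le> n}"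
    by (rule finite_lists_length_le) auto
  ultimately show ?thesis by (rule finite_subset)
qed

lemma Des_Nil[simp]: "Des [] = {}" by (auto simp: Des_def)

lemma Des_Cons: "Des (a # I) = (if I = [] then {} else insert a ((+) a ` Des I))"
proof (cases "I = []")
  case True then show ?thesis by (auto simp: Des_def)
next
  case False
  have "Des (a # I) = {a + sum_list (take j I) | j. j < length I}"
    unfolding Des_def
  proof (auto, goal_cases)
    case (1 j) then show ?case
      by (intro exI[of _ "j - 1"]) (cases j, auto)
  next
    case (2 j) then show ?case by (intro exI[of _ "Suc j"]) auto
  qed
  also have "\<dots> = insert a ((+) a ` Des I)"
    unfolding Des_def using False
  proof (auto, goal_cases)
    case (1 j) then show ?case by (cases j) auto
  next
    case 2 then show ?case by (intro exI[of _ 0]) auto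
  qed
  finally show ?thesis using False by simp
qed

lemma Des_single[simp]: "Des [a] = {}" by (simp add: Des_Cons)

lemma Des_sub: "I \<in> comps n \<Longrightarrow> Des I \<subseteq> {1..<n}"
proof (induction I arbitrary: n)
  case Nil then show ?case by simp
next
  case (Cons a I)
  then have IH: "Des I \<subseteq> {1..<n-a}" and a: "0 < a" "a \<le> n" by auto
  show ?case
  proof (cases "I = []")
    case True then show ?thesis by (simp add: Des_Cons)
  next
    case False
    then have "sum_list I > 0" using Cons.prems
      by (cases I) (auto simp: comps_def)
    then have "a < n" using Cons.prems by (auto simp: comps_def)
    moreover have "a + x < n" if "x \<in> Des I" for x using IH that by force
    ultimately show ?thesis using IH a False by (auto simp: Des_Cons)
  qed
qed

lemma Des_finite: "finite (Des I)"
  unfolding Des_def by (rule finite_subset[of _ "(\<lambda>j. sum_list (take j I)) ` {..<length I}"]) auto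

lemma length_Des: "I \<in> comps n \<Longrightarrow> length I = (if n = 0 then 0 else Suc (card (Des I)))"
proof (induction I arbitrary: n)
  case Nil then show ?case by simp
next
  case (Cons a I)
  then have a: "0 < a" "a \<le> n" and I: "I \<in> comps (n - a)" by auto
  then have IH: "length I = (if n - a = 0 then 0 else Suc (card (Des I)))" using Cons.IH by blast
  show ?case
  proof (cases "I = []")
    case True then show ?thesis using a I by (simp add: Des_Cons comps_0)
  next
    case False
    then have "n - a \<noteq> 0" using I by (cases I) (auto simp: comps_def)
    moreover have "a \<notin> (+) a ` Des I" using Des_sub[OF I] by auto
    ultimately show ?thesis using IH a False
      by (simp add: Des_Cons card_image Des_finite)
  qed
qed

lemma Des_inj: "I \<in> comps n \<Longrightarrow> I' \<in> comps n \<Longrightarrow> Des I = Des I' \<Longrightarrow> I = I'"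
proof (induction I arbitrary: I' n)
  case Nil then show ?case using comps_0 by auto
next
  case (Cons a I)
  from Cons.prems obtain a' I1 where I': "I' = a' # I1" by (cases I') auto
  have a: "0 < a" "a \<le> n" "I \<in> comps (n - a)" using Cons.prems by auto
  have a': "0 < a'" "a' \<le> n" "I1 \<in> comps (n - a')" using Cons.prems I' by auto
  show ?case
  proof (cases "I = []")
    case True
    then have "Des I' = {}" using Cons.prems by (simp add: Des_Cons)
    then have "I1 = []" using I' by (simp add: Des_Cons split: if_splits)
    then show ?thesis using True a a' I' by simp
  next
    case False
    then have "I1 \<noteq> []" using Cons.prems I' by (auto simp: Des_Cons split: if_splits)
    have E: "insert a ((+) a ` Des I) = insert a' ((+) a' ` Des I1)"
      using Cons.prems I' False \<open>I1 \<noteq> []\<close> by (simp add: Des_Cons)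
    have "a \<in> insert a' ((+) a' ` Des I1)" using E by blast
    then have "a' \<le> a" by auto
    moreover have "a' \<in> insert a ((+) a ` Des I)" using E by blast
    then have "a \<le> a'" by auto
    ultimately have aa: "a = a'" by simp
    have "a \<notin> (+) a ` Des I" using Des_sub[OF a(3)] by auto
    moreover have "a \<notin> (+) a ` Des I1" using Des_sub[OF a'(3)] by auto
    ultimately have "(+) a ` Des I = (+) a ` Des I1" using E aa
      by (metis insert_ident)
    then have "Des I = Des I1" by (simp add: inj_image_eq_iff)
    then have "I = I1" using Cons.IH[of "n - a" I1] a a' aa by simp
    then show ?thesis using I' aa by simp
  qed
qed

lemma Des_surj: "D \<subseteq> {1..<n} \<Longrightarrow> \<exists>I\<in>comps n. Des I = D"
proof (induction n arbitrary: D rule: less_induct)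
  case (less n)
  show ?case
  proof (cases "D = {}")
    case True
    show ?thesis
    proof (cases "n = 0")
      case True then show ?thesis using \<open>D = {}\<close> by (intro bexI[of _ "[]"]) auto
    next
      case False then show ?thesis using \<open>D = {}\<close> by (intro bexI[of _ "[n]"]) (auto simp: comps_def)
    qed
  next
    case False
    have fin: "finite D" using less.prems finite_subset by blast
    define a where "a = Min D"
    have aD: "a \<in> D" using False fin a_def by simp
    have amin: "\<And>d. d \<in> D \<Longrightarrow> a \<le> d" using fin a_def by simp
    have a: "0 < a" "a < n" using aD less.prems by auto
    define D' where "D' = (\<lambda>d. d - a) ` (D - {a})"
    have D'sub: "D' \<subseteq> {1..<n - a}" unfolding D'_def using less.prems amin
      by (force simp: le_less)
    obtain I where I: "I \<in> comps (n - a)" "Des I = D'" using less.IH[OF _ D'sub] a by auto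
    have "I \<noteq> []" using I a by auto
    have "(+) a ` D' = D - {a}" unfolding D'_def using amin
      by (force simp: image_image intro: image_eqI[where x = "_ - a"])
    then have "Des (a # I) = D" using \<open>I \<noteq> []\<close> I aD by (auto simp: Des_Cons)
    moreover have "a # I \<in> comps n" using I a by simp
    ultimately show ?thesis by blast
  qed
qed

lemma Des_bij_restr: "bij_betw Des {I\<in>comps n. P (Des I)} {S. S \<subseteq> {1..<n} \<and> P S}"
  unfolding bij_betw_def
proof
  show "inj_on Des {I \<in> comps n. P (Des I)}" using Des_inj by (auto simp: inj_on_def)
  show "Des ` {I \<in> comps n. P (Des I)} = {S. S \<subseteq> {1..<n} \<and> P S}"
  proof (intro equalityI subsetI)
    fix S assume "S \<in> Des ` {I \<in> comps n. P (Des I)}"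
    then show "S \<in> {S. S \<subseteq> {1..<n} \<and> P S}" using Des_sub by auto
  next
    fix S assume S: "S \<in> {S. S \<subseteq> {1..<n} \<and> P S}"
    then obtain I where "I \<in> comps n" "Des I = S" using Des_surj by blast
    then show "S \<in> Des ` {I \<in> comps n. P (Des I)}" using S by auto
  qed
qed

lemma sum_comps_Des:
  "(\<Sum>I\<in>{I\<in>comps n. P (Des I)}. g (Des I)) = (\<Sum>S\<in>{S. S \<subseteq> {1..<n} \<and> P S}. g S)"
  using sum.reindex_bij_betw[OF Des_bij_restr[of n P], of g] by simp



declare plus_fun_apply[simp del]

lemma smul_add: "smul c (f + g) = smul c f + smul c g" by (rule ext) (simp add: plus_fun_apply smul_apply algebra_simps)
lemma smul_add2: "smul (a + b) f = smul a f + smul b f" by (rule ext) (simp add: plus_fun_apply smul_apply algebra_simps)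
lemma smul_smul: "smul a (smul b f) = smul (a * b) f" by (rule ext) (simp add: smul_apply)
lemma smul_one[simp]: "smul 1 f = f" by (rule ext) (simp add: smul_apply)
lemma smul_zero[simp]: "smul 0 f = 0" by (rule ext) (simp add: smul_apply)
lemma smul_zero2[simp]: "smul c 0 = 0" by (rule ext) (simp add: smul_apply)
lemma smul_minus: "f - g = f + smul (-1) g" by (rule ext) (simp add: plus_fun_apply smul_apply)
lemma smul_sum: "smul c (\<Sum>x\<in>X. F x) = (\<Sum>x\<in>X. smul c (F x))"
  by (rule ext) (simp add: smul_apply sum_fun_apply sum_distrib_left)

lemma mul_apply: "mul f g w = (\<Sum>i\<le>length w. f (take i w) * g (drop i w))"
  by (simp add: mul_def)
lemma mul_add_left: "mul (f + g) h = mul f h + mul g h"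
  by (rule ext) (simp add: plus_fun_apply mul_def algebra_simps sum.distrib)
lemma mul_add_right: "mul h (f + g) = mul h f + mul h g"
  by (rule ext) (simp add: plus_fun_apply mul_def algebra_simps sum.distrib)
lemma mul_smul_left: "mul (smul c f) g = smul c (mul f g)"
  by (rule ext) (simp add: smul_apply mul_def sum_distrib_left mult.assoc)
lemma mul_smul_right: "mul f (smul c g) = smul c (mul f g)"
  by (rule ext) (simp add: smul_apply mul_def sum_distrib_left algebra_simps)
lemma mul_zero_left[simp]: "mul 0 g = 0" by (rule ext) (simp add: mul_def)
lemma mul_zero_right[simp]: "mul f 0 = 0" by (rule ext) (simp add: mul_def)
lemma mul_one_right: "mul f one_s = f"
proof (rule ext)
  fix w
  have "mul f one_s w = (\<Sum>i\<le>length w. if i = length w then f w else 0)"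
    unfolding mul_def one_s_def sw_def by (intro sum.cong) auto
  also have "\<dots> = f w" by simp
  finally show "mul f one_s w = f w" .
qed

lemma lspan_induct:
  assumes "0 \<in> S" "\<And>f g. f \<in> S \<Longrightarrow> g \<in> S \<Longrightarrow> f + g \<in> S"
    "\<And>c f. f \<in> S \<Longrightarrow> smul c f \<in> S" "A \<subseteq> S"
  shows "lspan A \<subseteq> S"
proof
  fix f assume "f \<in> lspan A"
  then obtain B c where B: "finite B" "B \<subseteq> A" "f = (\<Sum>b\<in>B. smul (c b) b)"
    unfolding lspan_def by blast
  have "(\<Sum>b\<in>B'. smul (c b) b) \<in> S" if "finite B'" "B' \<subseteq> A" for B'
    using that
  proof (induction B' rule: finite_induct)
    case empty then show ?case using assms(1) by (simp only: sum.empty)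
  next
    case (insert x F)
    have "(\<Sum>b\<in>insert x F. smul (c b) b) = smul (c x) x + (\<Sum>b\<in>F. smul (c b) b)"
      using insert.hyps by (rule sum.insert)
    then show ?case using assms(2,3,4) insert by auto
  qed
  then show "f \<in> S" using B by simp
qed

lemma lspan_zero: "0 \<in> lspan A"
  unfolding lspan_def by (intro CollectI exI[of _ "{}"]) auto

lemma lspan_base: "a \<in> A \<Longrightarrow> a \<in> lspan A"
  unfolding lspan_def by (intro CollectI exI[of _ "{a}"] exI[of _ "\<lambda>_. 1"]) auto

lemma lspan_smul: "f \<in> lspan A \<Longrightarrow> smul a f \<in> lspan A"
proof -
  assume "f \<in> lspan A"
  then obtain B c where B: "finite B" "B \<subseteq> A" "f = (\<Sum>b\<in>B. smul (c b) b)"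
    unfolding lspan_def by blast
  then have "smul a f = (\<Sum>b\<in>B. smul (a * c b) b)" by (simp add: smul_sum smul_smul)
  then show ?thesis using B unfolding lspan_def
    by (intro CollectI exI[of _ B] exI[of _ "\<lambda>b. a * c b"]) simp
qed

lemma lspan_add: "f \<in> lspan A \<Longrightarrow> g \<in> lspan A \<Longrightarrow> f + g \<in> lspan A"
proof -
  assume "f \<in> lspan A" "g \<in> lspan A"
  then obtain B c B' c' where B: "finite B" "B \<subseteq> A" "f = (\<Sum>b\<in>B. smul (c b) b)"
    and B': "finite B'" "B' \<subseteq> A" "g = (\<Sum>b\<in>B'. smul (c' b) b)"
    unfolding lspan_def by blast
  define d where "d b = (if b \<in> B then c b else 0) + (if b \<in> B' then c' b else 0)" for b
  have 1: "f = (\<Sum>b\<in>B \<union> B'. smul (if b \<in> B then c b else 0) b)"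
    unfolding B(3) using B B' by (intro sum.mono_neutral_cong_left) auto
  have 2: "g = (\<Sum>b\<in>B \<union> B'. smul (if b \<in> B' then c' b else 0) b)"
    unfolding B'(3) using B B' by (intro sum.mono_neutral_cong_left) auto
  have "f + g = (\<Sum>b\<in>B \<union> B'. smul (d b) b)"
    unfolding 1 2 d_def by (simp add: smul_add2 sum.distrib)
  then show ?thesis using B B' unfolding lspan_def
    by (intro CollectI exI[of _ "B \<union> B'"] exI[of _ d]) simp
qed

lemma lspan_sum: "(\<And>x. x \<in> X \<Longrightarrow> F x \<in> lspan G) \<Longrightarrow> (\<Sum>x\<in>X. F x) \<in> lspan G"
proof (induction X rule: infinite_finite_induct)
  case (infinite A) then show ?case by (metis sum.infinite lspan_zero)
next
  case empty then show ?case using lspan_zero by (simp only: sum.empty)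
next
  case (insert x F) then show ?case using lspan_add by (simp add: sum.insert)
qed

lemma lspan_diff: "f \<in> lspan A \<Longrightarrow> g \<in> lspan A \<Longrightarrow> f - g \<in> lspan A"
  by (simp add: smul_minus lspan_add lspan_smul)

lemma lspan_mono: "A \<subseteq> lspan B \<Longrightarrow> lspan A \<subseteq> lspan B"
  by (rule lspan_induct) (auto intro: lspan_zero lspan_add lspan_smul)

lemma alt0: "finite A \<Longrightarrow> (\<Sum>T\<in>Pow A. (-1::rat) ^ card T) = (if A = {} then 1 else 0)"
proof (induction A rule: finite_induct)
  case empty then show ?case by simp
next
  case (insert a A)
  have inj: "inj_on (insert a) (Pow A)" using insert.hyps
    by (auto simp: inj_on_def)
  have disj: "Pow A \<inter> insert a ` Pow A = {}" using insert.hyps by auto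
  have "(\<Sum>T\<in>Pow (insert a A). (-1::rat) ^ card T)
      = (\<Sum>T\<in>Pow A. (-1::rat) ^ card T) + (\<Sum>T\<in>insert a ` Pow A. (-1::rat) ^ card T)"
    unfolding Pow_insert using insert.hyps disj by (intro sum.union_disjoint) auto
  also have "(\<Sum>T\<in>insert a ` Pow A. (-1::rat) ^ card T) = (\<Sum>T\<in>Pow A. (-1::rat) ^ card (insert a T))"
    using inj by (simp add: sum.reindex)
  also have "\<dots> = (\<Sum>T\<in>Pow A. - ((-1::rat) ^ card T))"
  proof (intro sum.cong refl)
    fix T assume "T \<in> Pow A"
    then have "finite T" "a \<notin> T" using insert.hyps finite_subset by auto
    then show "(-1::rat) ^ card (insert a T) = - ((-1) ^ card T)" by simp
  qed
  finally show ?case by (simp add: sum_negf)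
qed

lemma alt1:
  assumes "finite C" "B \<subseteq> C"
  shows "(\<Sum>S\<in>{S. B \<subseteq> S \<and> S \<subseteq> C}. (-1::rat) ^ (card S - card B)) = (if B = C then 1 else 0)"
proof -
  have inj: "inj_on (\<lambda>T. B \<union> T) (Pow (C - B))" by (auto simp: inj_on_def)
  have img: "(\<lambda>T. B \<union> T) ` Pow (C - B) = {S. B \<subseteq> S \<and> S \<subseteq> C}"
    using assms(2) by (auto intro!: image_eqI[where x = "_ - B"])
  have "(\<Sum>S\<in>{S. B \<subseteq> S \<and> S \<subseteq> C}. (-1::rat) ^ (card S - card B))
      = (\<Sum>T\<in>Pow (C - B). (-1::rat) ^ (card (B \<union> T) - card B))"
    unfolding img[symmetric] using inj by (simp add: sum.reindex)
  also have "\<dots> = (\<Sum>T\<in>Pow (C - B). (-1::rat) ^ card T)"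
  proof (intro sum.cong refl)
    fix T assume "T \<in> Pow (C - B)"
    then have "finite T" using assms by (meson PowD finite_Diff finite_subset)
    moreover have "finite B" "B \<inter> T = {}" using assms \<open>T \<in> Pow (C - B)\<close> finite_subset by auto
    ultimately show "(-1::rat) ^ (card (B \<union> T) - card B) = (-1) ^ card T" by (simp add: card_Un_disjoint)
  qed
  also have "\<dots> = (if B = C then 1 else 0)" using assms alt0[of "C - B"] by auto
  finally show ?thesis .
qed

lemma alt2:
  assumes "finite C" "B \<subseteq> C"
  shows "(\<Sum>S\<in>{S. B \<subseteq> S \<and> S \<subseteq> C}. (-1::rat) ^ (card C - card S)) = (if B = C then 1 else 0)"
proof -
  have "(\<Sum>S\<in>{S. B \<subseteq> S \<and> S \<subseteq> C}. (-1::rat) ^ (card C - card S))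
      = (\<Sum>S\<in>{S. B \<subseteq> S \<and> S \<subseteq> C}. (-1::rat) ^ (card C - card B) * (-1::rat) ^ (card S - card B))"
  proof (intro sum.cong refl)
    fix S assume "S \<in> {S. B \<subseteq> S \<and> S \<subseteq> C}"
    then have le: "card B \<le> card S" "card S \<le> card C" using assms finite_subset card_mono by blast+
    then have "card C - card B = (card C - card S) + (card S - card B)" by simp
    then have "(-1::rat) ^ (card C - card B) * (-1) ^ (card S - card B)
        = (-1) ^ (card C - card S) * ((-1) ^ (card S - card B) * (-1) ^ (card S - card B))"
      by (simp add: power_add)
    also have "(-1::rat) ^ (card S - card B) * (-1) ^ (card S - card B) = 1"
      by (simp add: power_add[symmetric])
    finally show "(-1::rat) ^ (card C - card S) = (-1) ^ (card C - card B) * (-1) ^ (card S - card B)"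
      by simp
  qed
  also have "\<dots> = (-1::rat) ^ (card C - card B) * (if B = C then 1 else 0)"
    using alt1[OF assms] by (simp add: sum_distrib_left[symmetric])
  also have "\<dots> = (if B = C then 1 else 0)" by simp
  finally show ?thesis .
qed



definition homog :: "nat \<Rightarrow> nsym \<Rightarrow> bool" where
  "homog n f \<longleftrightarrow> (\<forall>w. w \<notin> comps n \<longrightarrow> f w = 0)"

definition rcD :: "nsym \<Rightarrow> nat \<Rightarrow> nat set \<Rightarrow> rat" where
  "rcD f n D = (\<Sum>I\<in>{I\<in>comps n. D \<subseteq> Des I}. f I)"

lemma rcD_alt: "rcD f n D = (\<Sum>I\<in>comps n. if D \<subseteq> Des I then f I else 0)"
  unfolding rcD_def by (simp add: sum.inter_filter comps_finite)

lemma ribbon_eval: "ribbon J w = (if w \<in> comps (sum_list J) \<and> Des w \<subseteq> Des J then (-1) ^ (length J - length w) else 0)"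
proof -
  have fin: "finite {I\<in>comps (sum_list J). Des I \<subseteq> Des J}" using comps_finite by simp
  have "ribbon J w = (\<Sum>I\<in>{I\<in>comps (sum_list J). Des I \<subseteq> Des J}. if w = I then (-1) ^ (length J - length I) else 0)"
    unfolding ribbon_def sum_fun_apply smul_apply sw_apply by (intro sum.cong) auto
  also have "\<dots> = (if w \<in> {I\<in>comps (sum_list J). Des I \<subseteq> Des J} then (-1) ^ (length J - length w) else 0)"
    by (rule sum.delta'[OF fin])
  finally show ?thesis by simp
qed

lemma homog_ribbon: "homog (sum_list J) (ribbon J)"
  unfolding homog_def by (simp add: ribbon_eval)

lemma homog_zero: "homog n 0" by (simp add: homog_def)
lemma homog_add: "homog n f \<Longrightarrow> homog n g \<Longrightarrow> homog n (f + g)"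
  by (simp add: homog_def plus_fun_apply)
lemma homog_smul: "homog n f \<Longrightarrow> homog n (smul c f)"
  by (simp add: homog_def smul_apply)
lemma homog_diff: "homog n f \<Longrightarrow> homog n g \<Longrightarrow> homog n (f - g)"
  by (simp add: smul_minus homog_add homog_smul)
lemma homog_sum: "(\<And>x. x \<in> X \<Longrightarrow> homog n (F x)) \<Longrightarrow> homog n (\<Sum>x\<in>X. F x)"
  by (simp add: homog_def sum_fun_apply)

lemma homog_mul: "homog m f \<Longrightarrow> homog k g \<Longrightarrow> homog (m + k) (mul f g)"
  unfolding homog_def
proof (intro allI impI)
  fix w assume f: "\<forall>w. w \<notin> comps m \<longrightarrow> f w = 0" and g: "\<forall>w. w \<notin> comps k \<longrightarrow> g w = 0"
    and w: "w \<notin> comps (m + k)"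
  have z: "f (take i w) * g (drop i w) = 0" for i
  proof (cases "take i w \<in> comps m \<and> drop i w \<in> comps k")
    case True
    then have "take i w @ drop i w \<in> comps (m + k)" by (intro comps_append) auto
    then show ?thesis using w by simp
  next
    case False then show ?thesis using f g by auto
  qed
  show "mul f g w = 0" unfolding mul_def using z by (intro sum.neutral) blast
qed

lemma homog_one: "homog 0 one_s"
  by (simp add: homog_def one_s_def sw_apply)

lemma rcD_add: "rcD (f + g) n D = rcD f n D + rcD g n D"
  by (simp add: rcD_def plus_fun_apply sum.distrib)
lemma rcD_smul: "rcD (smul c f) n D = c * rcD f n D"
  by (simp add: rcD_def smul_apply sum_distrib_left)
lemma rcD_zero: "rcD 0 n D = 0"
  by (simp add: rcD_def)
lemma rcD_diff: "rcD (f - g) n D = rcD f n D - rcD g n D"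
  by (simp add: smul_minus rcD_add rcD_smul)
lemma rcD_sum: "rcD (\<Sum>x\<in>X. F x) n D = (\<Sum>x\<in>X. rcD (F x) n D)"
  unfolding rcD_def sum_fun_apply by (rule sum.swap)

lemma length_diff_card:
  "I \<in> comps n \<Longrightarrow> K \<in> comps n \<Longrightarrow> length K - length I = card (Des K) - card (Des I)"
  using length_Des[of I n] length_Des[of K n] by auto

lemma rcD_ribbon:
  assumes K: "K \<in> comps n" and D: "D \<subseteq> {1..<n}"
  shows "rcD (ribbon K) n D = (if D = Des K then 1 else 0)"
proof -
  have sK: "sum_list K = n" using K by (simp add: comps_def)
  have "rcD (ribbon K) n D = (\<Sum>I\<in>comps n. if D \<subseteq> Des I \<and> Des I \<subseteq> Des K
         then (-1::rat) ^ (card (Des K) - card (Des I)) else 0)"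
    unfolding rcD_alt using K by (intro sum.cong refl) (auto simp: ribbon_eval sK length_diff_card)
  also have "\<dots> = (\<Sum>I\<in>{I\<in>comps n. D \<subseteq> Des I \<and> Des I \<subseteq> Des K}. (-1::rat) ^ (card (Des K) - card (Des I)))"
    by (simp add: sum.inter_filter comps_finite)
  also have "\<dots> = (\<Sum>S\<in>{S. S \<subseteq> {1..<n} \<and> (D \<subseteq> S \<and> S \<subseteq> Des K)}. (-1::rat) ^ (card (Des K) - card S))"
    by (rule sum_comps_Des)
  also have "\<dots> = (if D = Des K then 1 else 0)"
  proof (cases "D \<subseteq> Des K")
    case True
    have "{S. S \<subseteq> {1..<n} \<and> (D \<subseteq> S \<and> S \<subseteq> Des K)} = {S. D \<subseteq> S \<and> S \<subseteq> Des K}"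
      using Des_sub[OF K] by auto
    then show ?thesis using alt2[OF Des_finite True] by simp
  next
    case False
    then have "{S. S \<subseteq> {1..<n} \<and> (D \<subseteq> S \<and> S \<subseteq> Des K)} = {}" by blast
    moreover have "D \<noteq> Des K" using False by blast
    ultimately show ?thesis by (simp only: sum.empty if_False)
  qed
  finally show ?thesis .
qed

lemma inner_alt:
  assumes w: "w \<in> comps n" and I: "I \<in> comps n"
  shows "(\<Sum>J\<in>comps n. if Des w \<subseteq> Des J \<and> Des J \<subseteq> Des I
           then (-1::rat) ^ (card (Des J) - card (Des w)) else 0) = (if I = w then 1 else 0)"
proof -
  have "(\<Sum>J\<in>comps n. if Des w \<subseteq> Des J \<and> Des J \<subseteq> Des I
           then (-1::rat) ^ (card (Des J) - card (Des w)) else 0)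
     = (\<Sum>J\<in>{J\<in>comps n. Des w \<subseteq> Des J \<and> Des J \<subseteq> Des I}. (-1::rat) ^ (card (Des J) - card (Des w)))"
    by (simp add: sum.inter_filter comps_finite)
  also have "\<dots> = (\<Sum>S\<in>{S. S \<subseteq> {1..<n} \<and> (Des w \<subseteq> S \<and> S \<subseteq> Des I)}. (-1::rat) ^ (card S - card (Des w)))"
    by (rule sum_comps_Des)
  also have "\<dots> = (if I = w then 1 else 0)"
  proof (cases "Des w \<subseteq> Des I")
    case True
    have "{S. S \<subseteq> {1..<n} \<and> (Des w \<subseteq> S \<and> S \<subseteq> Des I)} = {S. Des w \<subseteq> S \<and> S \<subseteq> Des I}"
      using Des_sub[OF I] by auto
    then show ?thesis using alt1[OF Des_finite True] Des_inj[OF w I] by auto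
  next
    case False
    then have "{S. S \<subseteq> {1..<n} \<and> (Des w \<subseteq> S \<and> S \<subseteq> Des I)} = {}" by blast
    moreover have "I \<noteq> w" using False by blast
    ultimately show ?thesis by (simp only: sum.empty if_False)
  qed
  finally show ?thesis .
qed

lemma expansion:
  assumes "homog n f"
  shows "f = (\<Sum>J\<in>comps n. smul (rcD f n (Des J)) (ribbon J))"
proof (rule ext)
  fix w
  show "f w = (\<Sum>J\<in>comps n. smul (rcD f n (Des J)) (ribbon J)) w"
  proof (cases "w \<in> comps n")
    case False
    then have "ribbon J w = 0" if "J \<in> comps n" for J using that False by (simp add: ribbon_eval comps_sum)
    then show ?thesis using assms False by (simp add: homog_def sum_fun_apply smul_apply)
  next
    case True
    have "(\<Sum>J\<in>comps n. smul (rcD f n (Des J)) (ribbon J)) w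
        = (\<Sum>J\<in>comps n. (\<Sum>I\<in>comps n. if Des J \<subseteq> Des I then f I else 0) *
              (if Des w \<subseteq> Des J then (-1) ^ (card (Des J) - card (Des w)) else 0))"
      unfolding sum_fun_apply smul_apply rcD_alt using True
      by (intro sum.cong refl) (auto simp: ribbon_eval comps_sum length_diff_card)
    also have "\<dots> = (\<Sum>J\<in>comps n. \<Sum>I\<in>comps n. f I * (if Des w \<subseteq> Des J \<and> Des J \<subseteq> Des I
                then (-1) ^ (card (Des J) - card (Des w)) else 0))"
      by (simp add: sum_distrib_right) (intro sum.cong refl, auto)
    also have "\<dots> = (\<Sum>I\<in>comps n. f I * (\<Sum>J\<in>comps n. if Des w \<subseteq> Des J \<and> Des J \<subseteq> Des I
                then (-1) ^ (card (Des J) - card (Des w)) else 0))"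
      by (subst sum.swap) (simp add: sum_distrib_left)
    also have "\<dots> = (\<Sum>I\<in>comps n. f I * (if I = w then 1 else 0))"
      using True inner_alt by (intro sum.cong refl) auto
    also have "\<dots> = f w" using True comps_finite by (simp add: sum.delta' if_distrib cong: if_cong)
    finally show ?thesis by simp
  qed
qed

lemma homog_eq:
  assumes "homog n f" "homog n g" "\<And>D. D \<subseteq> {1..<n} \<Longrightarrow> rcD f n D = rcD g n D"
  shows "f = g"
proof -
  have "f = (\<Sum>J\<in>comps n. smul (rcD f n (Des J)) (ribbon J))" by (rule expansion[OF assms(1)])
  also have "\<dots> = (\<Sum>J\<in>comps n. smul (rcD g n (Des J)) (ribbon J))"
    using assms(3) Des_sub by (intro sum.cong refl) auto
  also have "\<dots> = g" by (rule expansion[OF assms(2), symmetric])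
  finally show ?thesis .
qed



lemma Des_append: "a \<in> comps m \<Longrightarrow>
  Des (a @ b) = Des a \<union> (if a \<noteq> [] \<and> b \<noteq> [] then {m} else {}) \<union> (+) m ` Des b"
proof (induction a arbitrary: m)
  case Nil then show ?case by simp
next
  case (Cons x a1)
  then have x: "0 < x" "x \<le> m" and a1: "a1 \<in> comps (m - x)" by auto
  note IH = Cons.IH[OF a1]
  show ?case
  proof (cases "a1 = []")
    case True
    then have "m = x" using a1 x by simp
    then show ?thesis using True by (auto simp: Des_Cons)
  next
    case False
    have "(+) x ` (+) (m - x) ` Des b = (+) m ` Des b" using x by (auto simp: image_image)
    then show ?thesis using False IH x by (auto simp: Des_Cons image_Un)
  qed
qed

lemma Des_append_sub:
  assumes a: "a \<in> comps m" and b: "b \<in> comps k" and D: "D \<subseteq> {1..<m+k}"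
  shows "D \<subseteq> Des (a @ b) \<longleftrightarrow> D \<inter> {1..<m} \<subseteq> Des a \<and> (\<lambda>d. d - m) ` (D \<inter> {m<..}) \<subseteq> Des b"
proof -
  have E: "Des (a @ b) = Des a \<union> (if a \<noteq> [] \<and> b \<noteq> [] then {m} else {}) \<union> (+) m ` Des b"
    by (rule Des_append[OF a])
  have Da: "Des a \<subseteq> {1..<m}" and Db: "Des b \<subseteq> {1..<k}" using Des_sub a b by auto
  show ?thesis
  proof
    assume L: "D \<subseteq> Des (a @ b)"
    have "D \<inter> {1..<m} \<subseteq> Des a"
    proof
      fix d assume d: "d \<in> D \<inter> {1..<m}"
      then have "d \<in> Des (a @ b)" using L by auto
      then show "d \<in> Des a" using d E by (auto split: if_splits)
    qed
    moreover have "(\<lambda>d. d - m) ` (D \<inter> {m<..}) \<subseteq> Des b"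
    proof
      fix e assume "e \<in> (\<lambda>d. d - m) ` (D \<inter> {m<..})"
      then obtain d where d: "d \<in> D" "m < d" "e = d - m" by auto
      then have "d \<in> Des (a @ b)" using L by auto
      then have "d \<in> (+) m ` Des b" using d E Da by (auto split: if_splits)
      then show "e \<in> Des b" using d by auto
    qed
    ultimately show "D \<inter> {1..<m} \<subseteq> Des a \<and> (\<lambda>d. d - m) ` (D \<inter> {m<..}) \<subseteq> Des b" ..
  next
    assume R: "D \<inter> {1..<m} \<subseteq> Des a \<and> (\<lambda>d. d - m) ` (D \<inter> {m<..}) \<subseteq> Des b"
    show "D \<subseteq> Des (a @ b)"
    proof
      fix d assume d: "d \<in> D"
      then have d1: "1 \<le> d" "d < m + k" using D by auto
      consider "d < m" | "d = m" | "m < d" by linarith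
      then show "d \<in> Des (a @ b)"
      proof cases
        case 1 then show ?thesis using R d d1 E by auto
      next
        case 2
        then have "a \<noteq> []" "b \<noteq> []" using a b d1 by auto
        then show ?thesis using E 2 by auto
      next
        case 3
        then have "d - m \<in> Des b" using R d by auto
        then have "m + (d - m) \<in> (+) m ` Des b" by blast
        then show ?thesis using E 3 by auto
      qed
    qed
  qed
qed

lemma rcD_mul:
  assumes f: "homog m f" and g: "homog k g" and D: "D \<subseteq> {1..<m+k}"
  shows "rcD (mul f g) (m + k) D = rcD f m (D \<inter> {1..<m}) * rcD g k ((\<lambda>d. d - m) ` (D \<inter> {m<..}))"
proof -
  let ?n = "m + k"
  let ?A = "{I\<in>comps ?n. D \<subseteq> Des I}"
  let ?S = "Sigma ?A (\<lambda>I. {..length I})"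
  let ?T = "{p. fst p \<in> comps m \<and> snd p \<in> comps k \<and> D \<subseteq> Des (fst p @ snd p)}"
  let ?A1 = "{a\<in>comps m. D \<inter> {1..<m} \<subseteq> Des a}"
  let ?B1 = "{b\<in>comps k. (\<lambda>d. d - m) ` (D \<inter> {m<..}) \<subseteq> Des b}"
  have finA: "finite ?A" using comps_finite by simp
  have "rcD (mul f g) ?n D = (\<Sum>I\<in>?A. \<Sum>i\<le>length I. f (take i I) * g (drop i I))"
    by (simp add: rcD_def mul_def)
  also have "\<dots> = (\<Sum>p\<in>?S. f (take (snd p) (fst p)) * g (drop (snd p) (fst p)))"
    using finA by (subst sum.Sigma) (auto simp: case_prod_beta)
  also have "\<dots> = (\<Sum>p\<in>?T. f (fst p) * g (snd p))"
  proof (rule sum.reindex_bij_witness_not_neutral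
      [where S' = "{p\<in>?S. take (snd p) (fst p) \<notin> comps m}" and T' = "{}"
         and j = "\<lambda>p. (take (snd p) (fst p), drop (snd p) (fst p))"
         and i = "\<lambda>q. (fst q @ snd q, length (fst q))"])
    show "finite {p\<in>?S. take (snd p) (fst p) \<notin> comps m}"
      using finA by (intro finite_subset[OF _ finite_SigmaI[of ?A "\<lambda>I. {..length I}"]]) auto
    show "finite {}" by simp
  next
    fix p assume p: "p \<in> ?S - {p\<in>?S. take (snd p) (fst p) \<notin> comps m}"
    then show "(fst (take (snd p) (fst p), drop (snd p) (fst p)) @ snd (take (snd p) (fst p), drop (snd p) (fst p)),
           length (fst (take (snd p) (fst p), drop (snd p) (fst p)))) = p"
      by (cases p) auto
    from p have I: "fst p \<in> comps ?n" "D \<subseteq> Des (fst p)" "snd p \<le> length (fst p)"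
      and t: "take (snd p) (fst p) \<in> comps m" by auto
    have "drop (snd p) (fst p) \<in> comps k"
    proof -
      have "sum_list (take (snd p) (fst p)) + sum_list (drop (snd p) (fst p)) = ?n"
        using I(1) by (metis append_take_drop_id comps_sum sum_list_append)
      then show ?thesis using t I(1) unfolding comps_def by (auto dest: in_set_dropD)
    qed
    then show "(take (snd p) (fst p), drop (snd p) (fst p)) \<in> ?T - {}" using t I by auto
  next
    fix q assume q: "q \<in> ?T - {}"
    then show "(take (snd (fst q @ snd q, length (fst q))) (fst (fst q @ snd q, length (fst q))),
          drop (snd (fst q @ snd q, length (fst q))) (fst (fst q @ snd q, length (fst q)))) = q"
      by (cases q) auto
    show "(fst q @ snd q, length (fst q)) \<in> ?S - {p\<in>?S. take (snd p) (fst p) \<notin> comps m}"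
      using q by (auto intro: comps_append)
  next
    fix p assume "p \<in> {p\<in>?S. take (snd p) (fst p) \<notin> comps m}"
    then show "f (take (snd p) (fst p)) * g (drop (snd p) (fst p)) = 0"
      using f by (auto simp: homog_def)
  next
    fix q :: "nat list \<times> nat list" assume "q \<in> {}" then show "f (fst q) * g (snd q) = 0" by simp
  next
    fix p show "f (fst (take (snd p) (fst p), drop (snd p) (fst p))) * g (snd (take (snd p) (fst p), drop (snd p) (fst p)))
        = f (take (snd p) (fst p)) * g (drop (snd p) (fst p))" by simp
  qed
  also have "?T = ?A1 \<times> ?B1"
  proof (rule set_eqI)
    fix p :: "nat list \<times> nat list"
    obtain a b where p: "p = (a, b)" by fastforce
    show "p \<in> ?T \<longleftrightarrow> p \<in> ?A1 \<times> ?B1"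
      unfolding p using Des_append_sub[OF _ _ D, of a b] by auto
  qed
  also have "(\<Sum>p\<in>?A1 \<times> ?B1. f (fst p) * g (snd p)) = (\<Sum>a\<in>?A1. \<Sum>b\<in>?B1. f a * g b)"
    by (subst sum.cartesian_product) (simp add: case_prod_beta)
  also have "\<dots> = rcD f m (D \<inter> {1..<m}) * rcD g k ((\<lambda>d. d - m) ` (D \<inter> {m<..}))"
    by (simp add: rcD_def sum_product)
  finally show ?thesis .
qed



lemma Des_rep1: "Des (replicate k 1) = {1..<k}"
proof (induction k)
  case 0 then show ?case by simp
next
  case (Suc k)
  show ?case
  proof (cases k)
    case 0 then show ?thesis by simp
  next
    case (Suc k')
    then have "Des (replicate (Suc k) 1) = insert 1 ((+) 1 ` {1..<k})"
      using Suc.IH by (simp add: Des_Cons)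
    also have "\<dots> = {1..<Suc k}" using Suc by (auto simp: image_iff intro: exI[of _ "_ - 1"])
    finally show ?thesis .
  qed
qed

lemma Des_rep1m: "0 < m \<Longrightarrow> Des (replicate k 1 @ [m]) = {1..k}"
proof (induction k)
  case 0 then show ?case by simp
next
  case (Suc k)
  have "Des (replicate (Suc k) 1 @ [m]) = insert 1 ((+) 1 ` {1..k})"
    using Suc by (simp add: Des_Cons)
  also have "\<dots> = {1..Suc k}" by (auto simp: image_iff intro: exI[of _ "_ - 1"])
  finally show ?case .
qed

lemma rep1_comps: "replicate k 1 \<in> comps k"
  by (auto simp: comps_def sum_list_replicate)

lemma rep1m_comps: "0 < m \<Longrightarrow> replicate k 1 @ [m] \<in> comps (k + m)"
  by (auto simp: comps_def sum_list_replicate)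

lemma one_s_ribbon: "one_s = ribbon []"
proof -
  have e: "{I \<in> comps (sum_list []). Des I \<subseteq> Des []} = {[]}"
  proof (intro equalityI subsetI)
    fix I assume "I \<in> {I \<in> comps (sum_list []). Des I \<subseteq> Des []}"
    then have "I \<in> comps 0" by simp
    then show "I \<in> {[]}" by (simp only: comps_0)
  next
    fix I :: "nat list" assume "I \<in> {[]}"
    then show "I \<in> {I \<in> comps (sum_list []). Des I \<subseteq> Des []}" by simp
  qed
  show ?thesis unfolding ribbon_def e one_s_def by simp
qed

lemma single_ribbon: "0 < m \<Longrightarrow> sw [m] = ribbon [m]"
proof -
  assume m: "0 < m"
  have "{I \<in> comps (sum_list [m]). Des I \<subseteq> Des [m]} = {[m]}"
  proof (intro equalityI subsetI)
    fix I assume "I \<in> {I \<in> comps (sum_list [m]). Des I \<subseteq> Des [m]}"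
    then have "I \<in> comps m" "Des I = Des [m]" by auto
    then show "I \<in> {[m]}" using Des_inj[of I m "[m]"] m by (auto simp: comps_def)
  qed (use m in \<open>auto simp: comps_def\<close>)
  then show ?thesis unfolding ribbon_def by (simp only:) simp
qed

lemma Sn_ribbon: "Sn m = ribbon (if m = 0 then [] else [m])"
  using one_s_ribbon single_ribbon by (simp add: Sn_def one_s_def)

lemma homog_Sn: "homog m (Sn m)"
  using homog_ribbon[of "if m = 0 then [] else [m]"] by (auto simp: Sn_ribbon split: if_splits)

lemma rcD_Sn: "E \<subseteq> {1..<m} \<Longrightarrow> rcD (Sn m) m E = (if E = {} then 1 else 0)"
  by (cases "m = 0") (auto simp: Sn_ribbon rcD_ribbon comps_def)

lemma homog_Lam: "homog k (Lam k)"
  using homog_ribbon[of "replicate k 1"] by (simp add: Lam_def sum_list_replicate)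

lemma rcD_Lam: "E \<subseteq> {1..<k} \<Longrightarrow> rcD (Lam k) k E = (if E = {1..<k} then 1 else 0)"
proof -
  assume "E \<subseteq> {1..<k}"
  then have "rcD (ribbon (replicate k 1)) k E = (if E = Des (replicate k 1) then 1 else 0)"
    by (rule rcD_ribbon[OF rep1_comps])
  then show ?thesis by (simp only: Lam_def Des_rep1)
qed

lemma comb_identity:
  fixes D :: "nat set" and n :: nat
  assumes D: "D \<subseteq> {1..<n}" and n: "1 \<le> n"
  shows "(\<Sum>k\<le>n. (if {1..<k} \<subseteq> D \<and> D \<subseteq> {..k} then 1 else 0))
       = 2 * (\<Sum>k<n. if D = {1..k} then (1::rat) else 0)"
proof (cases "\<exists>j<n. D = {1..j}")
  case True
  then obtain j :: nat where j: "j < n" "D = {1..j}" by auto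
  have "(\<Sum>k\<le>n. (if {1..<k} \<subseteq> D \<and> D \<subseteq> {..k} then (1::rat) else 0))
      = (\<Sum>k\<le>n. (if k = j then 1 else 0) + (if k = Suc j then 1 else 0))"
  proof (intro sum.cong refl)
    fix k
    have "({1..<k} \<subseteq> {1..j} \<and> {1..j} \<subseteq> {..k}) \<longleftrightarrow> (k = j \<or> k = Suc j)"
    proof
      assume a: "{1..<k} \<subseteq> {1..j} \<and> {1..j} \<subseteq> {..k}"
      have "k \<le> Suc j"
      proof (rule ccontr)
        assume "\<not> k \<le> Suc j"
        then have "Suc j \<in> {1..<k}" by auto
        then have "Suc j \<in> {1..j}" using a by blast
        then show False by simp
      qed
      moreover have "j \<le> k"
      proof (cases "j = 0")
        case False then have "j \<in> {1..j}" by auto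
        then show ?thesis using a by auto
      qed simp
      ultimately show "k = j \<or> k = Suc j" by auto
    qed auto
    then show "(if {1..<k} \<subseteq> D \<and> D \<subseteq> {..k} then (1::rat) else 0)
        = (if k = j then 1 else 0) + (if k = Suc j then 1 else 0)" using j by auto
  qed
  also have "\<dots> = 2" using j by (simp add: sum.distrib)
  finally have L: "(\<Sum>k\<le>n. (if {1..<k} \<subseteq> D \<and> D \<subseteq> {..k} then (1::rat) else 0)) = 2" .
  have "(\<Sum>k<n. if D = {1..k} then (1::rat) else 0) = (\<Sum>k<n. if k = j then 1 else 0)"
  proof (intro sum.cong refl)
    fix k
    have "{1..j} = {1..k} \<longleftrightarrow> j = k"
    proof
      assume e: "{1..j} = {1..k}"
      show "j = k"
      proof (rule ccontr)
        assume "j \<noteq> k"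
        then have "(max j k \<in> {1..j}) \<noteq> (max j k \<in> {1..k})" by (auto simp: max_def)
        then show False using e \<open>j \<noteq> k\<close> by simp
      qed
    qed simp
    then show "(if D = {1..k} then (1::rat) else 0) = (if k = j then 1 else 0)" using j by auto
  qed
  also have "\<dots> = 1" using j by simp
  finally show ?thesis using L by simp
next
  case False
  have "(if {1..<k} \<subseteq> D \<and> D \<subseteq> {..k} then (1::rat) else 0) = 0" if k: "k \<le> n" for k
  proof (rule ccontr)
    assume "(if {1..<k} \<subseteq> D \<and> D \<subseteq> {..k} then (1::rat) else 0) \<noteq> 0"
    then have a: "{1..<k} \<subseteq> D" "D \<subseteq> {..k}" by (auto split: if_splits)
    show False
    proof (cases "k \<in> D")
      case True
      then have "D = {1..k}" "k < n" using a D by (auto simp: subset_iff le_less)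
      then show False using False by auto
    next
      case k0: False
      have "D = {1..k - 1}"
      proof (intro equalityI subsetI)
        fix x assume x: "x \<in> D"
        then have "x \<noteq> k" "x \<le> k" "1 \<le> x" using k0 a(2) D by auto
        then show "x \<in> {1..k-1}" by auto
      next
        fix x assume "x \<in> {1..k-1}"
        then have "x \<in> {1..<k}" by auto
        then show "x \<in> D" using a(1) by blast
      qed
      moreover have "k - 1 < n" using k n by auto
      ultimately show False using False by auto
    qed
  qed
  then have "(\<Sum>k\<le>n. (if {1..<k} \<subseteq> D \<and> D \<subseteq> {..k} then (1::rat) else 0)) = 0" by simp
  moreover have "(\<Sum>k<n. if D = {1..k} then (1::rat) else 0) = 0" using False by simp
  ultimately show ?thesis by simp
qed

lemma part1: "1 \<le> n \<Longrightarrow> Stilde n = smul 2 (H n)"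
proof -
  assume n: "1 \<le> n"
  have hS: "homog n (mul (Lam k) (Sn (n - k)))" if "k \<in> {..n}" for k
    using homog_mul[OF homog_Lam homog_Sn, of k "n - k"] that by simp
  have hR: "homog n (ribbon (replicate k 1 @ [n - k]))" if "k \<in> {..<n}" for k
    using homog_ribbon[of "replicate k 1 @ [n - k]"] that by (simp add: sum_list_replicate)
  show ?thesis
  proof (rule homog_eq[of n])
    show "homog n (Stilde n)" unfolding Stilde_def by (rule homog_sum) (rule hS)
    show "homog n (smul 2 (H n))" unfolding H_def by (intro homog_smul homog_sum hR)
  next
    fix D assume D: "D \<subseteq> {1..<n}"
    have "rcD (Stilde n) n D = (\<Sum>k\<le>n. rcD (mul (Lam k) (Sn (n - k))) (k + (n - k)) D)"
      unfolding Stilde_def rcD_sum by simp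
    also have "\<dots> = (\<Sum>k\<le>n. (if {1..<k} \<subseteq> D \<and> D \<subseteq> {..k} then 1 else 0))"
    proof (intro sum.cong refl)
      fix k assume k: "k \<in> {..n}"
      have D': "D \<subseteq> {1..<k + (n - k)}" using D k by simp
      have e1: "(D \<inter> {1..<k} = {1..<k}) \<longleftrightarrow> {1..<k} \<subseteq> D" by auto
      have e2: "((\<lambda>d. d - k) ` (D \<inter> {k<..}) = {}) \<longleftrightarrow> D \<subseteq> {..k}" by auto
      have "rcD (mul (Lam k) (Sn (n - k))) (k + (n - k)) D
          = rcD (Lam k) k (D \<inter> {1..<k}) * rcD (Sn (n - k)) (n - k) ((\<lambda>d. d - k) ` (D \<inter> {k<..}))"
        by (rule rcD_mul[OF homog_Lam homog_Sn D'])
      also have "\<dots> = (if D \<inter> {1..<k} = {1..<k} then 1 else 0) *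
                      (if (\<lambda>d. d - k) ` (D \<inter> {k<..}) = {} then 1 else 0)"
      proof -
        have "(\<lambda>d. d - k) ` (D \<inter> {k<..}) \<subseteq> {1..<n - k}" using D by (fastforce simp: subset_iff)
        then show ?thesis by (simp add: rcD_Lam rcD_Sn)
      qed
      finally show "rcD (mul (Lam k) (Sn (n - k))) (k + (n - k)) D
          = (if {1..<k} \<subseteq> D \<and> D \<subseteq> {..k} then 1 else 0)" using e1 e2 by simp
    qed
    also have "\<dots> = 2 * (\<Sum>k<n. if D = {1..k} then (1::rat) else 0)"
      by (rule comb_identity[OF D n])
    also have "\<dots> = rcD (smul 2 (H n)) n D"
    proof -
      have "rcD (ribbon (replicate k 1 @ [n - k])) n D = (if D = {1..k} then 1 else 0)"
        if "k < n" for k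
      proof -
        have "rcD (ribbon (replicate k 1 @ [n - k])) n D = (if D = Des (replicate k 1 @ [n - k]) then 1 else 0)"
          using rcD_ribbon[OF rep1m_comps[of "n - k" k], of D] that D by simp
        moreover have "Des (replicate k 1 @ [n - k]) = {1..k}" by (rule Des_rep1m) (use that in simp)
        ultimately show ?thesis by (simp only:)
      qed
      then show ?thesis by (simp add: rcD_smul H_def rcD_sum)
    qed
    finally show "rcD (Stilde n) n D = rcD (smul 2 (H n)) n D" .
  qed
qed



definition HPs :: "nat set \<Rightarrow> nat set" where
  "HPs D = {a\<in>D. a \<noteq> 1 \<and> a - 1 \<notin> D}"

lemma HP_HPs: "HP J = HPs (Des J)" by (simp add: HP_def HPs_def)

lemma HPs_sub: "HPs D \<subseteq> D" by (auto simp: HPs_def)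

definition peaky :: "nat \<Rightarrow> nsym \<Rightarrow> bool" where
  "peaky n f \<longleftrightarrow> homog n f \<and> (\<forall>D D'. D \<subseteq> {1..<n} \<longrightarrow> D' \<subseteq> {1..<n} \<longrightarrow> HPs D = HPs D'
       \<longrightarrow> rcD f n D = rcD f n D')"

lemma peakyD: "peaky n f \<Longrightarrow> D \<subseteq> {1..<n} \<Longrightarrow> D' \<subseteq> {1..<n} \<Longrightarrow> HPs D = HPs D'
   \<Longrightarrow> rcD f n D = rcD f n D'"
  unfolding peaky_def by blast

lemma peaky_zero: "peaky n 0" by (simp add: peaky_def homog_zero rcD_zero)
lemma peaky_add: assumes f: "peaky n f" and g: "peaky n g" shows "peaky n (f + g)"
  unfolding peaky_def
proof (intro conjI allI impI)
  show "homog n (f + g)" using f g by (simp add: peaky_def homog_add)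
  fix D D' assume "D \<subseteq> {1..<n}" "D' \<subseteq> {1..<n}" "HPs D = HPs D'"
  then show "rcD (f + g) n D = rcD (f + g) n D'"
    using peakyD[OF f, of D D'] peakyD[OF g, of D D'] by (simp add: rcD_add)
qed
lemma peaky_smul: assumes f: "peaky n f" shows "peaky n (smul c f)"
  unfolding peaky_def
proof (intro conjI allI impI)
  show "homog n (smul c f)" using f by (simp add: peaky_def homog_smul)
  fix D D' assume "D \<subseteq> {1..<n}" "D' \<subseteq> {1..<n}" "HPs D = HPs D'"
  then show "rcD (smul c f) n D = rcD (smul c f) n D'"
    using peakyD[OF f, of D D'] by (simp add: rcD_smul)
qed
lemma peaky_diff: "peaky n f \<Longrightarrow> peaky n g \<Longrightarrow> peaky n (f - g)"
  by (simp add: smul_minus peaky_add peaky_smul)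

lemma HPs_left:
  assumes "D \<subseteq> {1..<n}"
  shows "HPs (D \<inter> {1..<m}) = HPs D \<inter> {1..<m}"
proof (intro equalityI subsetI)
  fix a assume "a \<in> HPs (D \<inter> {1..<m})"
  then show "a \<in> HPs D \<inter> {1..<m}" by (auto simp: HPs_def)
next
  fix a assume a: "a \<in> HPs D \<inter> {1..<m}"
  then have "a \<in> D" "a \<noteq> 1" "a - 1 \<notin> D" "1 \<le> a" "a < m" by (auto simp: HPs_def)
  then show "a \<in> HPs (D \<inter> {1..<m})" by (auto simp: HPs_def)
qed

lemma HPs_right:
  shows "HPs ((\<lambda>d. d - m) ` (D \<inter> {m<..})) = (\<lambda>d. d - m) ` {d \<in> HPs D. Suc m < d}"
proof (intro equalityI subsetI)
  fix x assume "x \<in> HPs ((\<lambda>d. d - m) ` (D \<inter> {m<..}))"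
  then have x: "x \<in> (\<lambda>d. d - m) ` (D \<inter> {m<..})" "x \<noteq> 1" "x - 1 \<notin> (\<lambda>d. d - m) ` (D \<inter> {m<..})"
    by (auto simp: HPs_def)
  then obtain d where d: "d \<in> D" "m < d" "x = d - m" by auto
  have "Suc m < d" using d x(2) by auto
  moreover have "d - 1 \<notin> D"
  proof
    assume "d - 1 \<in> D"
    moreover have "m < d - 1" using \<open>Suc m < d\<close> by auto
    moreover have "x - 1 = (d - 1) - m" using d by auto
    ultimately show False using x(3) by blast
  qed
  moreover have "d \<noteq> 1" using \<open>Suc m < d\<close> by auto
  ultimately show "x \<in> (\<lambda>d. d - m) ` {d \<in> HPs D. Suc m < d}" using d by (auto simp: HPs_def)
next
  fix x assume "x \<in> (\<lambda>d. d - m) ` {d \<in> HPs D. Suc m < d}"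
  then obtain d where d: "d \<in> D" "d - 1 \<notin> D" "Suc m < d" "x = d - m" by (auto simp: HPs_def)
  have "x \<in> (\<lambda>d. d - m) ` (D \<inter> {m<..})" using d by auto
  moreover have "x \<noteq> 1" using d by auto
  moreover have "x - 1 \<notin> (\<lambda>d. d - m) ` (D \<inter> {m<..})"
  proof
    assume "x - 1 \<in> (\<lambda>d. d - m) ` (D \<inter> {m<..})"
    then obtain d' where "d' \<in> D" "m < d'" "x - 1 = d' - m" by auto
    then have "d' = d - 1" using d by auto
    then show False using d \<open>d' \<in> D\<close> by auto
  qed
  ultimately show "x \<in> HPs ((\<lambda>d. d - m) ` (D \<inter> {m<..}))" by (auto simp: HPs_def)
qed

lemma peaky_mul:
  assumes f: "peaky m f" and g: "peaky k g"
  shows "peaky (m + k) (mul f g)"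
proof -
  have hf: "homog m f" and hg: "homog k g" using f g unfolding peaky_def by blast+
  show ?thesis
  unfolding peaky_def
proof (intro conjI allI impI)
  show "homog (m + k) (mul f g)" by (rule homog_mul[OF hf hg])
next
  fix D D' assume D: "D \<subseteq> {1..<m+k}" and D': "D' \<subseteq> {1..<m+k}" and H: "HPs D = HPs D'"
  have l: "rcD f m (D \<inter> {1..<m}) = rcD f m (D' \<inter> {1..<m})"
    using peakyD[OF f, of "D \<inter> {1..<m}" "D' \<inter> {1..<m}"] HPs_left[OF D, of m] HPs_left[OF D', of m] H
    by auto
  have r: "rcD g k ((\<lambda>d. d - m) ` (D \<inter> {m<..})) = rcD g k ((\<lambda>d. d - m) ` (D' \<inter> {m<..}))"
  proof (rule peakyD[OF g])
    show "(\<lambda>d. d - m) ` (D \<inter> {m<..}) \<subseteq> {1..<k}" using D by (fastforce simp: subset_iff)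
    show "(\<lambda>d. d - m) ` (D' \<inter> {m<..}) \<subseteq> {1..<k}" using D' by (fastforce simp: subset_iff)
    show "HPs ((\<lambda>d. d - m) ` (D \<inter> {m<..})) = HPs ((\<lambda>d. d - m) ` (D' \<inter> {m<..}))"
      by (simp add: HPs_right H)
  qed
  show "rcD (mul f g) (m + k) D = rcD (mul f g) (m + k) D'"
    using rcD_mul[OF hf hg D] rcD_mul[OF hf hg D'] l r by simp
qed
qed

definition ev :: "nat \<Rightarrow> nat set" where
  "ev k = {2 * j | j. 1 \<le> j \<and> j \<le> k}"

lemma ev_0: "ev 0 = {}" by (auto simp: ev_def)

lemma ev_Suc: "ev (Suc k) = insert 2 ((+) 2 ` ev k)"
proof (intro equalityI subsetI)
  fix x assume "x \<in> ev (Suc k)"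
  then obtain j where j: "x = 2 * j" "1 \<le> j" "j \<le> Suc k" by (auto simp: ev_def)
  show "x \<in> insert 2 ((+) 2 ` ev k)"
  proof (cases "j = 1")
    case True then show ?thesis using j by simp
  next
    case False
    then have "x = 2 + 2 * (j - 1)" "1 \<le> j - 1" "j - 1 \<le> k" using j by auto
    then show ?thesis unfolding ev_def by blast
  qed
next
  fix x assume "x \<in> insert 2 ((+) 2 ` ev k)"
  then show "x \<in> ev (Suc k)"
  proof
    assume "x = 2" then show ?thesis unfolding ev_def by (intro CollectI exI[of _ 1]) auto
  next
    assume "x \<in> (+) 2 ` ev k"
    then obtain j where "x = 2 + 2 * j" "1 \<le> j" "j \<le> k" by (auto simp: ev_def)
    then show ?thesis unfolding ev_def by (intro CollectI exI[of _ "Suc j"]) auto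
  qed
qed

definition Aw :: "nat \<Rightarrow> nat list" where "Aw k = replicate k 2 @ [1]"

lemma Aw_Suc: "Aw (Suc k) = 2 # Aw k" by (simp add: Aw_def)

lemma Aw_comps: "Aw k \<in> comps (2 * k + 1)"
  by (induction k) (auto simp: Aw_def comps_def sum_list_replicate)

lemma Des_Aw: "Des (Aw k) = ev k"
proof (induction k)
  case 0 then show ?case by (simp add: Aw_def ev_0)
next
  case (Suc k)
  have "Aw k \<noteq> []" by (simp add: Aw_def)
  then show ?case using Suc by (simp add: Aw_Suc Des_Cons ev_Suc)
qed

lemma ev_sub: "ev k \<subseteq> {2..2*k}" by (auto simp: ev_def)

lemma ev_even: "x \<in> ev k \<Longrightarrow> even x" by (auto simp: ev_def)

lemma HPs_ev: "HPs (ev k) = ev k"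
proof -
  have "x - 1 \<notin> ev k" if "x \<in> ev k" for x
  proof
    assume "x - 1 \<in> ev k"
    then have "even (x - 1)" using ev_even by blast
    moreover have "even x" using that ev_even by blast
    moreover have "x \<ge> 2" using that ev_sub by fastforce
    ultimately show False by auto
  qed
  moreover have "x \<noteq> 1" if "x \<in> ev k" for x using that ev_sub by fastforce
  ultimately show ?thesis by (auto simp: HPs_def)
qed

lemma ev_unique:
  assumes D: "D \<subseteq> {1..<2*k+1}" and H: "HPs D = ev k"
  shows "D = ev k"
proof (intro equalityI subsetI)
  fix x assume x: "x \<in> D"
  then have x1: "1 \<le> x" "x \<le> 2 * k" using D by auto
  show "x \<in> ev k"
  proof (cases "even x")
    case True
    then obtain j where "x = 2 * j" by auto
    then show ?thesis using x1 unfolding ev_def by auto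
  next
    case False
    then obtain j where j: "x = 2 * j + 1" using oddE by blast
    then have "x + 1 = 2 * (Suc j)" "1 \<le> Suc j" "Suc j \<le> k" using x1 by auto
    then have "x + 1 \<in> ev k" unfolding ev_def by blast
    then have "x + 1 \<in> HPs D" using H by simp
    then have "x + 1 - 1 \<notin> D" unfolding HPs_def by blast
    then show ?thesis using x by simp
  qed
next
  fix x assume "x \<in> ev k"
  then show "x \<in> D" using H HPs_sub by blast
qed

lemma Todd_Aw: "Todd i = ribbon (Aw (i div 2))" by (simp add: Todd_def Aw_def)

lemma odd_i: "odd (i::nat) \<Longrightarrow> 2 * (i div 2) + 1 = i" by presburger

lemma rcD_Todd:
  assumes i: "odd i" and D: "D \<subseteq> {1..<i}"
  shows "rcD (Todd i) i D = (if D = ev (i div 2) then 1 else 0)"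
proof -
  have c: "Aw (i div 2) \<in> comps i" using Aw_comps[of "i div 2"] odd_i[OF i] by simp
  show ?thesis unfolding Todd_Aw using rcD_ribbon[OF c D] by (simp add: Des_Aw)
qed

lemma homog_Todd: "odd i \<Longrightarrow> homog i (Todd i)"
  using homog_ribbon[of "Aw (i div 2)"] Aw_comps[of "i div 2"] odd_i[of i]
  by (simp add: Todd_Aw comps_sum)

lemma peaky_Todd: "odd i \<Longrightarrow> peaky i (Todd i)"
proof -
  assume i: "odd i"
  have "rcD (Todd i) i D = rcD (Todd i) i D'"
    if D: "D \<subseteq> {1..<i}" and D': "D' \<subseteq> {1..<i}" and H: "HPs D = HPs D'" for D D'
  proof -
    have s: "{1..<i} = {1..<2 * (i div 2) + 1}" using odd_i[OF i] by simp
    have "D = ev (i div 2) \<longleftrightarrow> D' = ev (i div 2)"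
      using ev_unique[of D "i div 2"] ev_unique[of D' "i div 2"] D D' H HPs_ev s by auto
    then show ?thesis using rcD_Todd[OF i D] rcD_Todd[OF i D'] by simp
  qed
  then show ?thesis using homog_Todd[OF i] unfolding peaky_def by blast
qed

lemma Tprod_Nil[simp]: "Tprod [] = one_s" by (simp add: Tprod_def)
lemma Tprod_Cons[simp]: "Tprod (i # I) = mul (Todd i) (Tprod I)" by (simp add: Tprod_def)

lemma peaky_one: "peaky 0 one_s" by (simp add: peaky_def homog_one)

lemma oddcomps_Nil[simp]: "[] \<in> oddcomps n \<longleftrightarrow> n = 0" by (simp add: oddcomps_def)
lemma oddcomps_Cons[simp]: "i # I \<in> oddcomps n \<longleftrightarrow> odd i \<and> i \<le> n \<and> I \<in> oddcomps (n - i)"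
  by (auto simp: oddcomps_def intro: odd_pos)

lemma oddcomps_sum: "I \<in> oddcomps n \<Longrightarrow> sum_list I = n" by (simp add: oddcomps_def comps_def)

lemma peaky_Tprod: "I \<in> oddcomps n \<Longrightarrow> peaky n (Tprod I)"
proof (induction I arbitrary: n)
  case Nil then show ?case by (simp add: peaky_one)
next
  case (Cons i I)
  then have i: "odd i" "i \<le> n" "I \<in> oddcomps (n - i)" by auto
  have "peaky (i + (n - i)) (mul (Todd i) (Tprod I))"
    by (rule peaky_mul[OF peaky_Todd[OF i(1)] Cons.IH[OF i(3)]])
  then show ?case using i by simp
qed



fun XD :: "nat list \<Rightarrow> nat set \<Rightarrow> bool" where
  "XD [] D = (D = {})"
| "XD (i # I) D = (D \<inter> {1..<i} = ev (i div 2) \<and> XD I ((\<lambda>d. d - i) ` (D \<inter> {i<..})))"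

fun D0 :: "nat list \<Rightarrow> nat set" where
  "D0 [] = {}"
| "D0 (i # I) = ev (i div 2) \<union> (+) i ` D0 I"

lemma homog_Tprod: "I \<in> oddcomps n \<Longrightarrow> homog n (Tprod I)"
  using peaky_Tprod unfolding peaky_def by blast

lemma rcD_one: "rcD one_s 0 {} = 1"
  using rcD_ribbon[of "[]" 0 "{}"] by (simp add: one_s_ribbon)

lemma rcD_Tprod: "I \<in> oddcomps n \<Longrightarrow> D \<subseteq> {1..<n} \<Longrightarrow> rcD (Tprod I) n D = (if XD I D then 1 else 0)"
proof (induction I arbitrary: n D)
  case Nil then show ?case using rcD_one by simp
next
  case (Cons i I)
  then have i: "odd i" "i \<le> n" "I \<in> oddcomps (n - i)" by auto
  have D: "D \<subseteq> {1..<i + (n - i)}" using Cons.prems i by simp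
  have sh: "(\<lambda>d. d - i) ` (D \<inter> {i<..}) \<subseteq> {1..<n - i}" using Cons.prems by (fastforce simp: subset_iff)
  have "rcD (Tprod (i # I)) (i + (n - i)) D
      = rcD (Todd i) i (D \<inter> {1..<i}) * rcD (Tprod I) (n - i) ((\<lambda>d. d - i) ` (D \<inter> {i<..}))"
    unfolding Tprod_Cons by (rule rcD_mul[OF homog_Todd[OF i(1)] homog_Tprod[OF i(3)] D])
  also have "\<dots> = (if XD (i # I) D then 1 else 0)"
    using rcD_Todd[OF i(1), of "D \<inter> {1..<i}"] Cons.IH[OF i(3) sh] by auto
  finally show ?case using i by simp
qed

lemma ev_sub_odd: assumes "odd i" shows "ev (i div 2) \<subseteq> {2..<i}"
proof
  fix x assume "x \<in> ev (i div 2)"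
  then have "x \<in> {2..2 * (i div 2)}" using ev_sub by blast
  then show "x \<in> {2..<i}" using odd_i[OF assms] by auto
qed

lemma D0_sub: "I \<in> oddcomps n \<Longrightarrow> D0 I \<subseteq> {2..<n}"
proof (induction I arbitrary: n)
  case Nil then show ?case by simp
next
  case (Cons i I)
  then have i: "odd i" "i \<le> n" "I \<in> oddcomps (n - i)" by auto
  have "(+) i ` D0 I \<subseteq> {2..<n}" using Cons.IH[OF i(3)] i odd_pos[OF i(1)] by (fastforce simp: subset_iff)
  then show ?case using ev_sub_odd[OF i(1)] i by auto
qed

lemma XD_D0: "I \<in> oddcomps n \<Longrightarrow> XD I (D0 I)"
proof (induction I arbitrary: n)
  case Nil then show ?case by simp
next
  case (Cons i I)
  then have i: "odd i" "i \<le> n" "I \<in> oddcomps (n - i)" by auto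
  have s: "D0 I \<subseteq> {2..<n - i}" by (rule D0_sub[OF i(3)])
  have e: "ev (i div 2) \<subseteq> {2..<i}" by (rule ev_sub_odd[OF i(1)])
  have 1: "D0 (i # I) \<inter> {1..<i} = ev (i div 2)" using s e by auto
  have 2: "(\<lambda>d. d - i) ` (D0 (i # I) \<inter> {i<..}) = D0 I"
  proof -
    have "D0 (i # I) \<inter> {i<..} = (+) i ` D0 I" using s e by auto
    then show ?thesis by (simp add: image_image)
  qed
  show ?case using 1 2 Cons.IH[OF i(3)] by simp
qed

lemma XD_HPs: "I \<in> oddcomps n \<Longrightarrow> XD I D \<Longrightarrow> D0 I \<subseteq> HPs D"
proof (induction I arbitrary: n D)
  case Nil then show ?case by simp
next
  case (Cons i I)
  then have i: "odd i" "i \<le> n" "I \<in> oddcomps (n - i)" by auto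
  let ?D' = "(\<lambda>d. d - i) ` (D \<inter> {i<..})"
  have X1: "D \<inter> {1..<i} = ev (i div 2)" and X2: "XD I ?D'" using Cons.prems by auto
  have IH: "D0 I \<subseteq> HPs ?D'" by (rule Cons.IH[OF i(3) X2])
  have s: "D0 I \<subseteq> {2..<n - i}" by (rule D0_sub[OF i(3)])
  have e: "ev (i div 2) \<subseteq> {2..<i}" by (rule ev_sub_odd[OF i(1)])
  have "x \<in> HPs D" if x: "x \<in> ev (i div 2)" for x
  proof -
    have "x \<in> D" using x X1 by blast
    moreover have "x \<noteq> 1" "x \<ge> 2" "x < i" using x e by auto
    moreover have "x - 1 \<notin> D"
    proof
      assume "x - 1 \<in> D"
      moreover have "x - 1 \<in> {1..<i}" using \<open>x \<ge> 2\<close> \<open>x < i\<close> by auto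
      ultimately have "x - 1 \<in> ev (i div 2)" using X1 by blast
      then have "even (x - 1)" by (rule ev_even)
      moreover have "even x" using x by (rule ev_even)
      ultimately show False using \<open>x \<ge> 2\<close> by presburger
    qed
    ultimately show ?thesis by (simp add: HPs_def)
  qed
  moreover have "i + y \<in> HPs D" if y: "y \<in> D0 I" for y
  proof -
    have y2: "y \<ge> 2" using y s by auto
    have yH: "y \<in> ?D'" "y - 1 \<notin> ?D'" using y IH by (auto simp: HPs_def)
    then obtain d where d: "d \<in> D" "i < d" "y = d - i" by auto
    then have "i + y \<in> D" by simp
    moreover have "i + y \<noteq> 1" using y2 by simp
    moreover have "i + y - 1 \<notin> D"
    proof
      assume "i + y - 1 \<in> D"
      moreover have "i < i + y - 1" using y2 by simp
      ultimately have "(i + y - 1) - i \<in> ?D'" by blast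
      then show False using yH(2) y2 by (simp add: add.commute)
    qed
    ultimately show ?thesis by (simp add: HPs_def)
  qed
  ultimately show ?case by auto
qed

lemma HPs_D0: "I \<in> oddcomps n \<Longrightarrow> HPs (D0 I) = D0 I"
  using XD_HPs[OF _ XD_D0] HPs_sub by blast

lemma oddcomps_0: "I \<in> oddcomps 0 \<Longrightarrow> I = []"
  by (cases I) (auto dest: odd_pos)

lemma D0_first:
  assumes "odd i" "odd i'" "i < i'" "D0 I \<subseteq> {2..<m}"
  shows "D0 (i # I) \<noteq> D0 (i' # I')"
proof
  assume eq: "D0 (i # I) = D0 (i' # I')"
  have "i + 1 \<in> ev (i' div 2)"
  proof -
    have "i + 1 = 2 * ((i + 1) div 2)" using assms(1) by simp
    moreover have "1 \<le> (i + 1) div 2" "(i + 1) div 2 \<le> i' div 2" using assms by presburger+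
    ultimately show ?thesis unfolding ev_def by blast
  qed
  then have "i + 1 \<in> D0 (i # I)" using eq by simp
  moreover have "i + 1 \<notin> ev (i div 2)" using ev_sub_odd[OF assms(1)] by auto
  moreover have "i + 1 \<notin> (+) i ` D0 I" using assms(4) by auto
  ultimately show False by simp
qed

lemma D0_inj: "I \<in> oddcomps n \<Longrightarrow> I' \<in> oddcomps n \<Longrightarrow> D0 I = D0 I' \<Longrightarrow> I = I'"
proof (induction I arbitrary: I' n)
  case Nil
  then have "n = 0" by simp
  then show ?case using Nil.prems oddcomps_0 by metis
next
  case (Cons i I)
  then have i: "odd i" "i \<le> n" "I \<in> oddcomps (n - i)" by auto
  then have "n \<noteq> 0" using odd_pos by fastforce
  then obtain i' I1 where I': "I' = i' # I1" using Cons.prems(2) by (cases I') auto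
  then have i': "odd i'" "i' \<le> n" "I1 \<in> oddcomps (n - i')" using Cons.prems by auto
  have "i = i'"
  proof (rule ccontr)
    assume "i \<noteq> i'"
    then consider "i < i'" | "i' < i" by linarith
    then show False
    proof cases
      case 1 then show False using D0_first[OF i(1) i'(1) 1 D0_sub[OF i(3)], of I1] Cons.prems I' by simp
    next
      case 2 then show False using D0_first[OF i'(1) i(1) 2 D0_sub[OF i'(3)], of I] Cons.prems I' by simp
    qed
  qed
  have s: "D0 I \<subseteq> {2..<n - i}" "D0 I1 \<subseteq> {2..<n - i}" using D0_sub i(3) i'(3) \<open>i = i'\<close> by auto
  have e: "ev (i div 2) \<subseteq> {2..<i}" by (rule ev_sub_odd[OF i(1)])
  have f1: "D0 (i # I) \<inter> {i<..} = (+) i ` D0 I" using s e by auto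
  have f2: "D0 (i # I1) \<inter> {i<..} = (+) i ` D0 I1" using s e by auto
  have eq: "D0 (i # I) = D0 (i # I1)" using Cons.prems(3) I' \<open>i = i'\<close> by (simp only:)
  have "(+) i ` D0 I = D0 (i # I) \<inter> {i<..}" using f1 by (rule sym)
  also have "\<dots> = D0 (i # I1) \<inter> {i<..}" by (simp only: eq)
  also have "\<dots> = (+) i ` D0 I1" by (rule f2)
  finally have "(+) i ` D0 I = (+) i ` D0 I1" .
  then have "D0 I = D0 I1" by (simp add: inj_image_eq_iff)
  then have "I = I1" using Cons.IH[OF i(3)] i'(3) \<open>i = i'\<close> by simp
  then show ?case using I' \<open>i = i'\<close> by simp
qed

lemma D0_surj: "P \<subseteq> {2..<n} \<Longrightarrow> (\<forall>a\<in>P. Suc a \<notin> P) \<Longrightarrow> \<exists>I\<in>oddcomps n. D0 I = P"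
proof (induction n arbitrary: P rule: less_induct)
  case (less n)
  show ?case
  proof (cases "n = 0")
    case True
    then have "P = {}" using less.prems by auto
    then show ?thesis using True by (intro bexI[of _ "[]"]) auto
  next
    case n0: False
    show ?thesis
    proof (cases "2 \<in> P")
      case False
      define P' where "P' = (\<lambda>p. p - 1) ` P"
      have P3: "\<And>p. p \<in> P \<Longrightarrow> 3 \<le> p \<and> p < n" using less.prems(1) False
        by (metis atLeastLessThan_iff eval_nat_numeral(3) le_antisym not_less_eq_eq subsetD)
      have "P' \<subseteq> {2..<n - 1}" unfolding P'_def using P3 by fastforce
      moreover have "\<forall>a\<in>P'. Suc a \<notin> P'"
      proof
        fix a assume "a \<in> P'"
        then obtain p where p: "p \<in> P" "a = p - 1" unfolding P'_def by auto
        show "Suc a \<notin> P'"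
        proof
          assume "Suc a \<in> P'"
          then obtain q where q: "q \<in> P" "Suc a = q - 1" unfolding P'_def by auto
          then have "q = Suc p" using p P3 by fastforce
          then show False using less.prems(2) p q by blast
        qed
      qed
      ultimately obtain I1 where I1: "I1 \<in> oddcomps (n - 1)" "D0 I1 = P'"
        using less.IH[of "n - 1" P'] n0 by auto
      have "D0 (1 # I1) = P"
      proof -
        have "D0 (1 # I1) = (+) 1 ` P'" using I1 by (simp add: ev_0)
        also have "\<dots> = P" unfolding P'_def using P3 by (force simp: image_image)
        finally show ?thesis .
      qed
      moreover have "1 # I1 \<in> oddcomps n" using I1 n0 by simp
      ultimately show ?thesis by blast
    next
      case True
      have "3 \<notin> P" using True less.prems(2) by (metis numeral_2_eq_2 numeral_3_eq_3)
      have n3: "3 \<le> n" using True less.prems(1) by auto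
      define P' where "P' = (\<lambda>p. p - 2) ` (P - {2})"
      have P4: "\<And>p. p \<in> P - {2} \<Longrightarrow> 4 \<le> p \<and> p < n" using less.prems(1) \<open>3 \<notin> P\<close>
      proof -
        fix p assume p: "p \<in> P - {2}"
        then have "2 \<le> p" "p < n" "p \<noteq> 2" "p \<noteq> 3" using less.prems(1) \<open>3 \<notin> P\<close> by auto
        then show "4 \<le> p \<and> p < n" by auto
      qed
      have "P' \<subseteq> {2..<n - 2}" unfolding P'_def using P4 by fastforce
      moreover have "\<forall>a\<in>P'. Suc a \<notin> P'"
      proof
        fix a assume "a \<in> P'"
        then obtain p where p: "p \<in> P - {2}" "a = p - 2" unfolding P'_def by auto
        show "Suc a \<notin> P'"
        proof
          assume "Suc a \<in> P'"
          then obtain q where q: "q \<in> P - {2}" "Suc a = q - 2" unfolding P'_def by auto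
          then have "q = Suc p" using p P4 by fastforce
          then show False using less.prems(2) p q by blast
        qed
      qed
      ultimately obtain I1 where I1: "I1 \<in> oddcomps (n - 2)" "D0 I1 = P'"
        using less.IH[of "n - 2" P'] n3 by auto
      then obtain i1 I1' where I1e: "I1 = i1 # I1'" using n3 by (cases I1) auto
      then have i1: "odd i1" "i1 \<le> n - 2" "I1' \<in> oddcomps (n - 2 - i1)" using I1 by auto
      have "D0 ((i1 + 2) # I1') = P"
      proof -
        have "(i1 + 2) div 2 = Suc (i1 div 2)" by simp
        then have "D0 ((i1 + 2) # I1') = insert 2 ((+) 2 ` ev (i1 div 2)) \<union> (+) (i1 + 2) ` D0 I1'"
          by (simp add: ev_Suc)
        also have "\<dots> = insert 2 ((+) 2 ` D0 I1)" using I1e by (auto simp: image_image add.assoc image_Un)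
        also have "\<dots> = insert 2 ((+) 2 ` P')" using I1 by simp
        also have "\<dots> = P"
        proof -
          have "(+) 2 ` (\<lambda>p. p - 2) ` (P - {2}) = (\<lambda>p. p) ` (P - {2})"
            unfolding image_image
          proof (intro image_cong refl)
            fix x assume "x \<in> P - {2}"
            then have "4 \<le> x" using P4 by blast
            then show "2 + (x - 2) = x" by simp
          qed
          then show ?thesis unfolding P'_def using True by auto
        qed
        finally show ?thesis .
      qed
      moreover have "(i1 + 2) # I1' \<in> oddcomps n" using i1 n3 by auto
      ultimately show ?thesis by blast
    qed
  qed
qed

lemma HPs_props:
  assumes "D \<subseteq> {1..<n}"
  shows "HPs D \<subseteq> {2..<n}" "\<forall>a\<in>HPs D. Suc a \<notin> HPs D"
proof -
  show "HPs D \<subseteq> {2..<n}"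
  proof
    fix a assume "a \<in> HPs D"
    then have "a \<in> D" "a \<noteq> 1" by (auto simp: HPs_def)
    then show "a \<in> {2..<n}" using assms by fastforce
  qed
  show "\<forall>a\<in>HPs D. Suc a \<notin> HPs D" by (auto simp: HPs_def)
qed



lemma homog_PiP: "homog n (PiP n P)"
  unfolding PiP_def by (rule homog_sum) (metis (mono_tags, lifting) comps_sum homog_ribbon mem_Collect_eq)

lemma rcD_PiP:
  assumes D: "D \<subseteq> {1..<n}"
  shows "rcD (PiP n P) n D = (if HPs D = P then 1 else 0)"
proof -
  obtain J0 where J0: "J0 \<in> comps n" "Des J0 = D" using Des_surj[OF D] by blast
  have fin: "finite {J\<in>comps n. HP J = P}" using comps_finite by simp
  have "rcD (PiP n P) n D = (\<Sum>J\<in>{J\<in>comps n. HP J = P}. rcD (ribbon J) n D)"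
    unfolding PiP_def rcD_sum ..
  also have "\<dots> = (\<Sum>J\<in>{J\<in>comps n. HP J = P}. if J0 = J then 1 else 0)"
  proof (intro sum.cong refl)
    fix J assume J: "J \<in> {J\<in>comps n. HP J = P}"
    then have "D = Des J \<longleftrightarrow> J0 = J" using J0 Des_inj[of J0 n J] by auto
    then show "rcD (ribbon J) n D = (if J0 = J then 1 else 0)" using rcD_ribbon[of J n D] J D by auto
  qed
  also have "\<dots> = (if J0 \<in> {J\<in>comps n. HP J = P} then 1 else 0)"
    by (rule sum.delta'[OF fin])
  also have "\<dots> = (if HPs D = P then 1 else 0)" using J0 by (simp add: HP_HPs)
  finally show ?thesis .
qed

lemma peaky_PiP: "peaky n (PiP n P)"
  unfolding peaky_def using homog_PiP rcD_PiP by simp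

definition cf :: "nsym \<Rightarrow> nat \<Rightarrow> nat set \<Rightarrow> rat" where
  "cf f n P = rcD f n (Des (SOME J. J \<in> comps n \<and> HP J = P))"

lemma peaky_expand:
  assumes f: "peaky n f"
  shows "f = (\<Sum>P\<in>HP ` comps n. smul (cf f n P) (PiP n P))"
proof -
  have hf: "homog n f" using f unfolding peaky_def by blast
  have "f = (\<Sum>J\<in>comps n. smul (rcD f n (Des J)) (ribbon J))" by (rule expansion[OF hf])
  also have "\<dots> = (\<Sum>P\<in>HP ` comps n. \<Sum>J\<in>{J\<in>comps n. HP J = P}. smul (rcD f n (Des J)) (ribbon J))"
    by (rule sum.image_gen[OF comps_finite])
  also have "\<dots> = (\<Sum>P\<in>HP ` comps n. \<Sum>J\<in>{J\<in>comps n. HP J = P}. smul (cf f n P) (ribbon J))"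
  proof (intro sum.cong refl)
    fix P J assume P: "P \<in> HP ` comps n" and J: "J \<in> {J\<in>comps n. HP J = P}"
    let ?J = "SOME J. J \<in> comps n \<and> HP J = P"
    have "\<exists>J. J \<in> comps n \<and> HP J = P" using P by auto
    then have SJ: "?J \<in> comps n" "HP ?J = P" using someI_ex[of "\<lambda>J. J \<in> comps n \<and> HP J = P"] by auto
    have "rcD f n (Des J) = rcD f n (Des ?J)"
      by (rule peakyD[OF f]) (use J SJ Des_sub in \<open>auto simp: HP_HPs\<close>)
    then show "smul (rcD f n (Des J)) (ribbon J) = smul (cf f n P) (ribbon J)" by (simp add: cf_def)
  qed
  also have "\<dots> = (\<Sum>P\<in>HP ` comps n. smul (cf f n P) (PiP n P))"
    by (simp add: PiP_def smul_sum)
  finally show ?thesis .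
qed

lemma cf_nz:
  assumes "P \<in> HP ` comps n"
  shows "\<exists>D. D \<subseteq> {1..<n} \<and> HPs D = P \<and> cf f n P = rcD f n D"
proof -
  let ?J = "SOME J. J \<in> comps n \<and> HP J = P"
  have "\<exists>J. J \<in> comps n \<and> HP J = P" using assms by auto
  then have SJ: "?J \<in> comps n" "HP ?J = P" using someI_ex[of "\<lambda>J. J \<in> comps n \<and> HP J = P"] by auto
  then show ?thesis using Des_sub by (intro exI[of _ "Des ?J"]) (auto simp: cf_def HP_HPs)
qed

lemma Pn_peaky: "f \<in> Pn n \<Longrightarrow> peaky n f"
proof -
  have "Pn n \<subseteq> {f. peaky n f}"
    unfolding Pn_def
    by (rule lspan_induct) (auto intro: peaky_zero peaky_add peaky_smul peaky_PiP)
  then show "f \<in> Pn n \<Longrightarrow> peaky n f" by blast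
qed

lemma peaky_Pn: "peaky n f \<Longrightarrow> f \<in> Pn n"
proof -
  assume f: "peaky n f"
  have "(\<Sum>P\<in>HP ` comps n. smul (cf f n P) (PiP n P)) \<in> Pn n"
    unfolding Pn_def by (intro lspan_sum lspan_smul lspan_base) blast
  then show ?thesis using peaky_expand[OF f] by simp
qed

lemma Tprod_Pn: "I \<in> oddcomps n \<Longrightarrow> Tprod I \<in> Pn n"
  using peaky_Pn peaky_Tprod by blast

lemma span_PiP: "PiP n P \<in> lspan (Tprod ` oddcomps n)"
proof (induction "n - card P" arbitrary: P rule: less_induct)
  case less
  let ?L = "lspan (Tprod ` oddcomps n)"
  show ?case
  proof (cases "\<exists>J\<in>comps n. HP J = P")
    case False
    then have e: "{J\<in>comps n. HP J = P} = {}" by auto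
    have "PiP n P = 0" unfolding PiP_def e by simp
    then show ?thesis using lspan_zero by simp
  next
    case True
    then obtain J0 where J0: "J0 \<in> comps n" "HP J0 = P" by blast
    have Psub: "P \<subseteq> {2..<n}" "\<forall>a\<in>P. Suc a \<notin> P"
      using HPs_props[OF Des_sub[OF J0(1)]] J0 by (auto simp: HP_HPs)
    obtain I where I: "I \<in> oddcomps n" "D0 I = P" using D0_surj[OF Psub] by blast
    have D0sub: "D0 I \<subseteq> {1..<n}" using D0_sub[OF I(1)] by auto
    define f where "f = Tprod I - PiP n P"
    have pf: "peaky n f" unfolding f_def by (intro peaky_diff peaky_Tprod peaky_PiP I(1))
    have T1: "rcD (Tprod I) n (D0 I) = 1" using rcD_Tprod[OF I(1) D0sub] XD_D0[OF I(1)] by simp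
    have "smul (cf f n Q) (PiP n Q) \<in> ?L" if Q: "Q \<in> HP ` comps n" for Q
    proof -
      obtain DQ where DQ: "DQ \<subseteq> {1..<n}" "HPs DQ = Q" "cf f n Q = rcD f n DQ"
        using cf_nz[OF Q] by blast
      have cfQ: "cf f n Q = rcD (Tprod I) n DQ - (if Q = P then 1 else 0)"
        using DQ by (simp add: f_def rcD_diff rcD_PiP)
      show ?thesis
      proof (cases "cf f n Q = 0")
        case True then show ?thesis using lspan_zero by simp
      next
        case nz: False
        show ?thesis
        proof (cases "Q = P")
          case True
          have "rcD (Tprod I) n DQ = rcD (Tprod I) n (D0 I)"
            using peakyD[OF peaky_Tprod[OF I(1)] DQ(1) D0sub] DQ(2) HPs_D0[OF I(1)] I(2) True by simp
          then have "cf f n Q = 0" using cfQ T1 True by simp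
          then show ?thesis using nz by simp
        next
          case False
          then have "rcD (Tprod I) n DQ \<noteq> 0" using cfQ nz by simp
          then have "XD I DQ" using rcD_Tprod[OF I(1) DQ(1)] by (simp split: if_splits)
          then have "P \<subseteq> Q" using XD_HPs[OF I(1)] DQ(2) I(2) by blast
          moreover have fQ2: "Q \<subseteq> {1..<n}" using DQ(1,2) HPs_sub by blast
          moreover have fQ1: "finite Q" using fQ2 finite_subset by blast
          note fQ = fQ1 fQ2
          ultimately have "card P < card Q" using False by (intro psubset_card_mono) auto
          moreover have "card Q \<le> n" using card_mono[OF _ fQ(2)] by simp
          ultimately have "n - card Q < n - card P" by linarith
          then have "PiP n Q \<in> ?L" by (rule less.hyps)
          then show ?thesis by (rule lspan_smul)
        qed
      qed
    qed
    then have "(\<Sum>P\<in>HP ` comps n. smul (cf f n P) (PiP n P)) \<in> ?L" by (rule lspan_sum)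
    then have "f \<in> ?L" using peaky_expand[OF pf] by simp
    moreover have "Tprod I \<in> ?L" using I(1) by (intro lspan_base) blast
    ultimately have "Tprod I - f \<in> ?L" by (intro lspan_diff)
    then show ?thesis by (simp add: f_def)
  qed
qed

lemma indep:
  assumes s: "(\<Sum>I\<in>oddcomps n. smul (c I) (Tprod I)) = 0" and I0: "I0 \<in> oddcomps n"
  shows "c I0 = 0"
proof (rule ccontr)
  assume c0: "c I0 \<noteq> 0"
  obtain Im where Im: "Im \<in> oddcomps n \<and> c Im \<noteq> 0"
    and min: "\<And>I. I \<in> oddcomps n \<and> c I \<noteq> 0 \<Longrightarrow> card (D0 Im) \<le> card (D0 I)"
    using ex_has_least_nat[of "\<lambda>I. I \<in> oddcomps n \<and> c I \<noteq> 0" I0 "\<lambda>I. card (D0 I)"] I0 c0 by blast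
  have D0sub: "D0 Im \<subseteq> {1..<n}" using D0_sub Im by fastforce
  have fin: "finite (oddcomps n)" using comps_finite by (simp add: oddcomps_def)
  have "0 = rcD (\<Sum>I\<in>oddcomps n. smul (c I) (Tprod I)) n (D0 Im)" using s by (simp add: rcD_zero)
  also have "\<dots> = (\<Sum>I\<in>oddcomps n. c I * (if XD I (D0 Im) then 1 else 0))"
    unfolding rcD_sum rcD_smul using rcD_Tprod[OF _ D0sub] by simp
  also have "\<dots> = (\<Sum>I\<in>oddcomps n. if Im = I then c Im else 0)"
  proof (intro sum.cong refl)
    fix I assume I: "I \<in> oddcomps n"
    show "c I * (if XD I (D0 Im) then 1 else 0) = (if Im = I then c Im else 0)"
    proof (cases "Im = I")
      case True then show ?thesis using XD_D0 Im by auto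
    next
      case False
      have "\<not> (c I \<noteq> 0 \<and> XD I (D0 Im))"
      proof
        assume a: "c I \<noteq> 0 \<and> XD I (D0 Im)"
        then have "D0 I \<subseteq> D0 Im" using XD_HPs[OF I] HPs_D0 Im by blast
        moreover have "card (D0 Im) \<le> card (D0 I)" using min I a by blast
        moreover have "finite (D0 Im)" using D0sub finite_subset by blast
        ultimately have "D0 I = D0 Im" using card_mono[of "D0 Im" "D0 I"]
          by (intro card_subset_eq) auto
        then show False using D0_inj[OF I] Im False by fastforce
      qed
      then show ?thesis using False by auto
    qed
  qed
  also have "\<dots> = c Im" using Im fin by (simp add: sum.delta)
  finally show False using Im by simp
qed

lemma part3: "lspan (Tprod ` oddcomps n) = Pn n"
proof
  show "lspan (Tprod ` oddcomps n) \<subseteq> Pn n"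
    unfolding Pn_def by (rule lspan_mono) (use Tprod_Pn in \<open>auto simp: Pn_def\<close>)
  show "Pn n \<subseteq> lspan (Tprod ` oddcomps n)"
    unfolding Pn_def by (rule lspan_mono) (use span_PiP in auto)
qed

lemma gen_zero: "0 \<in> gen_alg G"
  using gen_alg.gen_smul[OF gen_alg.gen_one, where c = 0] by simp

lemma lspan_gen: "A \<subseteq> gen_alg G \<Longrightarrow> lspan A \<subseteq> gen_alg G"
  by (rule lspan_induct) (auto intro: gen_zero gen_alg.gen_add gen_alg.gen_smul)

lemma Tprod_gen: "I \<in> oddcomps n \<Longrightarrow> Tprod I \<in> gen_alg (range (\<lambda>k. Todd (2 * k + 1)))"
proof (induction I arbitrary: n)
  case Nil then show ?case by (simp add: gen_alg.gen_one)
next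
  case (Cons i I)
  then have i: "odd i" "I \<in> oddcomps (n - i)" by auto
  have "Todd i = Todd (2 * (i div 2) + 1)" using odd_i[OF i(1)] by simp
  then have "Todd i \<in> gen_alg (range (\<lambda>k. Todd (2 * k + 1)))" by (auto intro: gen_alg.gen_base)
  then show ?case using Cons.IH[OF i(2)] by (simp add: gen_alg.gen_mul)
qed

lemma calP_mul: "f \<in> calP \<Longrightarrow> g \<in> calP \<Longrightarrow> mul f g \<in> calP"
proof -
  have base: "mul f g \<in> calP" if "f \<in> (\<Union>n. Pn n)" "g \<in> (\<Union>n. Pn n)" for f g
  proof -
    from that(1) obtain m where fm: "f \<in> Pn m" by blast
    from that(2) obtain k where gk: "g \<in> Pn k" by blast
    have "peaky (m + k) (mul f g)" by (rule peaky_mul[OF Pn_peaky[OF fm] Pn_peaky[OF gk]])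
    then have "mul f g \<in> Pn (m + k)" by (rule peaky_Pn)
    then show ?thesis unfolding calP_def by (intro lspan_base) blast
  qed
  have step: "calP \<subseteq> {g. mul f g \<in> calP}" if f: "f \<in> (\<Union>n. Pn n)" for f
    unfolding calP_def[of] 
    apply (rule lspan_induct)
    using base[OF f] by (auto simp: mul_add_right mul_smul_right calP_def
        intro: lspan_zero lspan_add lspan_smul)
  have "calP \<subseteq> {f. \<forall>g\<in>calP. mul f g \<in> calP}"
    unfolding calP_def[of]
    apply (rule lspan_induct)
    using step by (auto simp: mul_add_left mul_smul_left calP_def
        intro: lspan_zero lspan_add lspan_smul)
  then show "f \<in> calP \<Longrightarrow> g \<in> calP \<Longrightarrow> mul f g \<in> calP" by blast
qed

lemma part2: "calP = gen_alg (range (\<lambda>k. Todd (2 * k + 1)))"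
proof
  show "calP \<subseteq> gen_alg (range (\<lambda>k. Todd (2 * k + 1)))"
    unfolding calP_def
  proof (rule lspan_gen)
    show "(\<Union>n. Pn n) \<subseteq> gen_alg (range (\<lambda>k. Todd (2 * k + 1)))"
    proof
      fix f assume "f \<in> (\<Union>n. Pn n)"
      then obtain n where "f \<in> Pn n" by blast
      then have "f \<in> lspan (Tprod ` oddcomps n)" using part3 by simp
      moreover have "lspan (Tprod ` oddcomps n) \<subseteq> gen_alg (range (\<lambda>k. Todd (2 * k + 1)))"
        using Tprod_gen by (intro lspan_gen) blast
      ultimately show "f \<in> gen_alg (range (\<lambda>k. Todd (2 * k + 1)))" by blast
    qed
  qed
  show "gen_alg (range (\<lambda>k. Todd (2 * k + 1))) \<subseteq> calP"
  proof
    fix f assume "f \<in> gen_alg (range (\<lambda>k. Todd (2 * k + 1)))"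
    then show "f \<in> calP"
    proof induction
      case gen_one
      have "one_s \<in> Pn 0" by (rule peaky_Pn[OF peaky_one])
      then show ?case unfolding calP_def by (intro lspan_base) blast
    next
      case (gen_base g)
      then obtain k where "g = Todd (2 * k + 1)" by blast
      then have "g \<in> Pn (2 * k + 1)" using peaky_Pn peaky_Todd by simp
      then show ?case unfolding calP_def by (intro lspan_base) blast
    next
      case (gen_add f g) then show ?case unfolding calP_def using lspan_add by blast
    next
      case (gen_smul f c) then show ?case unfolding calP_def using lspan_smul by blast
    next
      case (gen_mul f g) then show ?case using calP_mul by blast
    qed
  qed
qed

theorem mainTheorem4:
  shows "(\<forall>n\<ge>1. Stilde n = smul 2 (H n))
    \<and> calP = gen_alg (range (\<lambda>k. Todd (2 * k + 1)))
    \<and> (\<forall>n. (\<forall>c. (\<Sum>I\<in>oddcomps n. smul (c I) (Tprod I)) = 0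
                  \<longrightarrow> (\<forall>I\<in>oddcomps n. c I = 0))
          \<and> lspan (Tprod ` oddcomps n) = Pn n)"
  using part1 part2 part3 indep by blast

end
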